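(* Let $\epsilon \in (0,1)$ and $s, k, T \in \mathbb{N}$. Let $\mathcal{W}$ be any distribution on $\{0,1\}^T$ satisfying the $\epsilon$-martingale condition, and let $\mathcal{B}_\epsilon$ be the distribution on $\{0,1\}^T$ of independent bits each equal to $1$ with probability $(1-\epsilon)/2$. Then \[ \mathbf{S}^{s,k}[\mathcal{W}] \le \mathbf{S}^{s,k}[\mathcal{B}_\epsilon] \le \exp\bigl(-\Omega(\epsilon^3(1-O(\epsilon))k)\bigr), \] where the asymptotic notation hides constants that do not depend on $\epsilon$ or $k$.
   Context: Characteristic strings and forks. A characteristic string is $w=w_1\dots w_n\in\{0,1\}^n$; index $i$ is honest if $w_i=0$ and adversarial if $w_i=1$. A fork for $w$ is a rooted tree $F=(V,E)$ with edges directed away from the root $r$, together with a labeling $\ell:V\to\{0,1,\dots,n\}$, such that (F1) $\ell(r)=0$; (F2) labels strictly increase along every directed path; (F3) every honest index $i$ is the label of exactly one vertex; (F4) if $i<j$ are honest indices then the vertex labeled $i$ has strictly smaller depth than the vertex labeled $j$. Write $F\vdash w$. A tine is a directed path starting at the root (not necessarily ending at a leaf); its length is its number of edges. For strings $x$ a prefix of $w$ and forks $F\vdash x$, $F'\vdash w$, write $F\sqsubseteq F'$ if $F$ is a subgraph of $F'$ with identical labels. Settlement. For $w\in\{0,1\}^n$ and a fork $F\vdash w_1\dots w_t$ with $s+k\le t\le n$, slot $s$ is not $k$-settled in $F$ if $F$ contains two tines of maximum length which either contain different vertices labeled $s$, or one contains a vertex labeled $s$ and the other does not; otherwise slot $s$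 is $k$-settled in $F$. Settlement game. For a distribution $\mathcal{D}$ on $\{0,1\}^T$, the $(\mathcal{D},T;s,k)$-settlement game between an adversary $\mathcal{A}$ and a deterministic challenger: (1) $w\in\{0,1\}^T$ is drawn from $\mathcal{D}$ and given to $\mathcal{A}$; (2) $A_0$ is the fork for the empty string consisting of a single root vertex; (3) for $t=1,\dots,T$ in order: (a) if $w_t=0$, the challenger forms $F_t\vdash w_1\dots w_t$ by adding one vertex labeled $t$ to the end of a longest path of $A_{t-1}$ (ties broken by $\mathcal{A}$); (b) if $w_t=1$, $\mathcal{A}$ chooses an arbitrary fork $F_t\vdash w_1\dots w_t$ with $A_{t-1}\sqsubseteq F_t$; (c) $\mathcal{A}$ chooses an arbitrary fork $A_t\vdash w_1\dots w_t$ with $F_t\sqsubseteq A_t$. $\mathcal{A}$ wins if slot $s$ is not $k$-settled in some $A_t$ with $t\ge s+k$. The $(s,k)$-settlement insecurity is $\mathbf{S}^{s,k}[\mathcal{D}]=\max_{\mathcal{A}}\Pr[\mathcal{A}\text{ wins}]$. A random variable $W=(W_1,\dots,W_n)\in\{0,1\}^n$ (or its distribution) satisfies the $\epsilon$-martingale condition if for every $t$, $\Pr[W_t=1\mid W_1,\dots,W_{t-1}]\le(1-\epsilon)/2$ (for arbitrary conditioning values). *)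

theory Defs
  imports "HOL-Probability.Probability_Mass_Function"
begin

text \<open>Characteristic strings are bool lists; index i (1-based) is w ! (i - 1);
  True = adversarial (bit 1), False = honest (bit 0).\<close>

definition honest :: "bool list \<Rightarrow> nat \<Rightarrow> bool" where
  "honest w i \<longleftrightarrow> 1 \<le> i \<and> i \<le> length w \<and> \<not> w ! (i - 1)"

record fork =
  verts :: "nat set"
  edges :: "(nat \<times> nat) set"
  root :: nat
  lab :: "nat \<Rightarrow> nat"

definition depth :: "fork \<Rightarrow> nat \<Rightarrow> nat" where
  "depth F v = (LEAST m. (root F, v) \<in> edges F ^^ m)"

definition is_fork :: "bool list \<Rightarrow> fork \<Rightarrow> bool" where
  "is_fork w F \<longleftrightarrow>
     finite (verts F) \<and> root F \<in> verts F \<and> edges F \<subseteq> verts F \<times> verts F \<and>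
     \<comment> \<open>rooted tree with edges directed away from the root\<close>
     (\<forall>u. (u, root F) \<notin> edges F) \<and>
     (\<forall>v\<in>verts F. v \<noteq> root F \<longrightarrow> (\<exists>!u. (u, v) \<in> edges F)) \<and>
     (\<forall>v\<in>verts F. (root F, v) \<in> (edges F)\<^sup>*) \<and>
     \<comment> \<open>labels in {0..n}\<close>
     (\<forall>v\<in>verts F. lab F v \<le> length w) \<and>
     \<comment> \<open>(F1)\<close>
     lab F (root F) = 0 \<and>
     \<comment> \<open>(F2) labels strictly increase along every directed path\<close>
     (\<forall>u v. (u, v) \<in> (edges F)\<^sup>+ \<longrightarrow> lab F u < lab F v) \<and>
     \<comment> \<open>(F3)\<close>
     (\<forall>i. honest w i \<longrightarrow> card {v\<in>verts F. lab F v = i} = 1) \<and>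
     \<comment> \<open>(F4)\<close>
     (\<forall>i j u v. honest w i \<and> honest w j \<and> i < j \<and> u \<in> verts F \<and> v \<in> verts F \<and>
        lab F u = i \<and> lab F v = j \<longrightarrow> depth F u < depth F v)"

definition subfork :: "fork \<Rightarrow> fork \<Rightarrow> bool" where
  "subfork F F' \<longleftrightarrow> verts F \<subseteq> verts F' \<and> edges F \<subseteq> edges F' \<and>
     (\<forall>v\<in>verts F. lab F v = lab F' v)"

text \<open>A tine: directed path starting at the root, as a list of vertices;
  its length is the number of edges, i.e. length p - 1.\<close>
definition tine :: "fork \<Rightarrow> nat list \<Rightarrow> bool" where
  "tine F p \<longleftrightarrow> p \<noteq> [] \<and> hd p = root F \<and> set p \<subseteq> verts F \<and>
     (\<forall>i. Suc i < length p \<longrightarrow> (p ! i, p ! Suc i) \<in> edges F)"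

definition max_tine :: "fork \<Rightarrow> nat list \<Rightarrow> bool" where
  "max_tine F p \<longleftrightarrow> tine F p \<and> (\<forall>q. tine F q \<longrightarrow> length q - 1 \<le> length p - 1)"

text \<open>Slot s is not settled in F (the side condition s + k \<le> t \<le> n is imposed
  where this is used).\<close>
definition not_settled :: "fork \<Rightarrow> nat \<Rightarrow> bool" where
  "not_settled F s \<longleftrightarrow> (\<exists>p q. max_tine F p \<and> max_tine F q \<and>
     ((\<exists>u\<in>set p. \<exists>v\<in>set q. lab F u = s \<and> lab F v = s \<and> u \<noteq> v) \<or>
      ((\<exists>u\<in>set p. lab F u = s) \<and> \<not> (\<exists>v\<in>set q. lab F v = s))))"

type_synonym play = "(nat \<Rightarrow> fork) \<times> (nat \<Rightarrow> fork)"

definition valid_play :: "bool list \<Rightarrow> play \<Rightarrow> bool" where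
  "valid_play w P \<longleftrightarrow> (let Fs = fst P; As = snd P in
     is_fork [] (As 0) \<and> verts (As 0) = {root (As 0)} \<and>
     (\<forall>t\<in>{1..length w}.
        (\<not> w ! (t - 1) \<longrightarrow>
           (\<exists>p v. max_tine (As (t - 1)) p \<and> v \<notin> verts (As (t - 1)) \<and>
              verts (Fs t) = insert v (verts (As (t - 1))) \<and>
              edges (Fs t) = insert (last p, v) (edges (As (t - 1))) \<and>
              root (Fs t) = root (As (t - 1)) \<and>
              (\<forall>x\<in>verts (As (t - 1)). lab (Fs t) x = lab (As (t - 1)) x) \<and>
              lab (Fs t) v = t)) \<and>
        (w ! (t - 1) \<longrightarrow> is_fork (take t w) (Fs t) \<and> subfork (As (t - 1)) (Fs t)) \<and>
        is_fork (take t w) (As t) \<and> subfork (Fs t) (As t)))"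

definition wins :: "nat \<Rightarrow> nat \<Rightarrow> bool list \<Rightarrow> play \<Rightarrow> bool" where
  "wins s k w P \<longleftrightarrow> (\<exists>t. s + k \<le> t \<and> t \<le> length w \<and> not_settled (snd P t) s)"

text \<open>Adversaries: since w is revealed to the adversary at the start and the
  challenger is deterministic, a (deterministic) adversary is a map from w to its
  whole play.  (Randomised adversaries are mixtures of these and do not increase
  the supremum.)\<close>
definition settle_insec :: "bool list pmf \<Rightarrow> nat \<Rightarrow> nat \<Rightarrow> nat \<Rightarrow> real" where
  "settle_insec D T s k =
     (SUP adv \<in> {adv :: bool list \<Rightarrow> play. \<forall>w. length w = T \<longrightarrow> valid_play w (adv w)}.
        measure_pmf.prob D {w. wins s k w (adv w)})"

definition martingale_cond :: "real \<Rightarrow> nat \<Rightarrow> bool list pmf \<Rightarrow> bool" where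
  "martingale_cond \<epsilon> T W \<longleftrightarrow>
     (\<forall>x. length x < T \<longrightarrow>
        measure_pmf.prob W {w. take (length x) w = x \<and> w ! length x}
          \<le> (1 - \<epsilon>) / 2 * measure_pmf.prob W {w. take (length x) w = x})"

fun bern_list :: "real \<Rightarrow> nat \<Rightarrow> bool list pmf" where
  "bern_list p 0 = return_pmf []"
| "bern_list p (Suc n) =
     map_pmf (\<lambda>(b, bs). b # bs) (pair_pmf (bernoulli_pmf p) (bern_list p n))"

end

theory Submission
  imports Defs
begin


definition wt :: "real \<Rightarrow> bool list \<Rightarrow> real" where
  "wt q w = prod_list (map (\<lambda>b. if b then q else 1 - q) w)"

definition Ex :: "real \<Rightarrow> nat \<Rightarrow> (bool list \<Rightarrow> real) \<Rightarrow> real" where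
  "Ex q n f = (\<Sum>w\<in>{w. length w = n}. wt q w * f w)"

lemma Ex_0: "Ex q 0 f = f []"
  by (simp add: Ex_def wt_def)

lemma lists_Suc_eq: "{w::bool list. length w = Suc n} = (\<lambda>(b,bs). b # bs) ` (UNIV \<times> {bs. length bs = n})"
  by (auto simp: length_Suc_conv image_def)

lemma Ex_Suc: "Ex q (Suc n) f = q * Ex q n (\<lambda>bs. f (True # bs)) + (1 - q) * Ex q n (\<lambda>bs. f (False # bs))"
proof -
  have inj: "inj_on (\<lambda>(b::bool, bs). b # bs) (UNIV \<times> {bs. length bs = n})"
    by (auto simp: inj_on_def)
  have "Ex q (Suc n) f = (\<Sum>(b,bs)\<in>UNIV \<times> {bs::bool list. length bs = n}. wt q (b # bs) * f (b # bs))"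
    unfolding Ex_def lists_Suc_eq by (subst sum.reindex[OF inj]) (simp add: case_prod_unfold)
  also have "\<dots> = (\<Sum>b\<in>UNIV. \<Sum>bs\<in>{bs::bool list. length bs = n}. wt q (b # bs) * f (b # bs))"
    by (rule sum.cartesian_product[symmetric])
  also have "\<dots> = q * Ex q n (\<lambda>bs. f (True # bs)) + (1 - q) * Ex q n (\<lambda>bs. f (False # bs))"
    by (simp add: UNIV_bool Ex_def wt_def sum_distrib_left mult.assoc)
  finally show ?thesis .
qed

lemma wt_nonneg: "0 \<le> q \<Longrightarrow> q \<le> 1 \<Longrightarrow> 0 \<le> wt q w"
  unfolding wt_def by (induction w) auto

lemma Ex_mono: "0 \<le> q \<Longrightarrow> q \<le> 1 \<Longrightarrow> (\<And>w. length w = n \<Longrightarrow> f w \<le> g w) \<Longrightarrow> Ex q n f \<le> Ex q n g"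
  unfolding Ex_def by (rule sum_mono) (auto intro: mult_left_mono wt_nonneg)

lemma Ex_const: "0 \<le> q \<Longrightarrow> q \<le> 1 \<Longrightarrow> Ex q n (\<lambda>_. c) = c"
  by (induction n) (auto simp: Ex_0 Ex_Suc algebra_simps)

fun go :: "nat \<Rightarrow> nat \<Rightarrow> nat \<Rightarrow> nat \<Rightarrow> nat \<Rightarrow> bool list \<Rightarrow> nat" where
  "go s k u d g [] = g"
| "go s k u d g (x # xs) = go s k (Suc u) (if x then Suc d else d - 1)
     (if x then g - 1 else if 0 < g then Suc g else if d = 0 \<and> s \<le> u \<and> u < s + k then 1 else 0) xs"

lemma post:
  fixes e :: real
  assumes e: "0 < e" "e < 1" and u: "s + k \<le> u"
  shows "Ex ((1 - e) / 2) n (\<lambda>xs. ((1 - e) / (1 + e)) ^ go s k u d g xs) \<le> ((1 - e) / (1 + e)) ^ g"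
  using u
proof (induction n arbitrary: u d g)
  case 0
  then show ?case by (simp add: Ex_0)
next
  case (Suc n)
  define r where "r = (1 - e) / (1 + e)"
  have A: "Ex ((1 - e) / 2) n (\<lambda>xs. r ^ go s k (Suc u) d' g' xs) \<le> r ^ g'" for d' g'
    using Suc.IH[of "Suc u"] Suc.prems by (simp add: r_def)
  have "Ex ((1 - e) / 2) (Suc n) (\<lambda>xs. r ^ go s k u d g xs)
     = (1 - e) / 2 * Ex ((1 - e) / 2) n (\<lambda>xs. r ^ go s k (Suc u) (Suc d) (g - 1) xs)
       + (1 - (1 - e) / 2) * Ex ((1 - e) / 2) n (\<lambda>xs. r ^ go s k (Suc u) (d - 1) (if 0 < g then Suc g else 0) xs)"
    unfolding Ex_Suc using Suc.prems by simp
  also have "\<dots> \<le> (1 - e) / 2 * r ^ (g - 1) + (1 - (1 - e) / 2) * r ^ (if 0 < g then Suc g else 0)"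
    using A e by (intro add_mono mult_left_mono) auto
  also have "\<dots> \<le> r ^ g"
  proof (cases g)
    case 0 then show ?thesis by simp
  next
    case (Suc g')
    have "(1 - e) / 2 * r ^ g' + (1 - (1 - e) / 2) * r ^ Suc (Suc g') = r ^ g' * ((1 - e) / 2 + (1 + e) / 2 * r * r)"
      by (simp add: field_simps)
    also have "(1 - e) / 2 + (1 + e) / 2 * r * r = r"
    proof -
      have r1: "(1 + e) * r = 1 - e" using e by (simp add: r_def)
      have "(1 + e) / 2 * r * r = ((1 + e) * r) * r / 2" by simp
      also have "\<dots> = (1 - e) / 2 * r" unfolding r1 by simp
      finally have "(1 + e) / 2 * r * r = (1 - e) / 2 * r" .
      moreover have "(1 - e) / 2 + (1 - e) / 2 * r = r"
        using r1 by (simp add: algebra_simps) (simp add: field_simps)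
      ultimately show ?thesis by linarith
    qed
    finally show ?thesis using Suc by simp
  qed
  finally show ?case by (simp add: r_def)
qed


definition Psi :: "real \<Rightarrow> nat \<Rightarrow> nat \<Rightarrow> real" where
  "Psi e d g = (1 + e^2/2) ^ (d + g) * (1 - e) ^ g"

lemma ineq_a: "0 < e \<Longrightarrow> e < (1::real) \<Longrightarrow>
  (1 - e) / 2 + (1 + e) / 2 * (1 + e^2/2) * (1 - e)^2 \<le> (1 - e^3/4) * (1 - e)"
proof -
  assume e: "0 < e" "e < 1"
  have "(1 - e^3/4) * (1 - e) - ((1 - e) / 2 + (1 + e) / 2 * (1 + e^2/2) * (1 - e)^2) = (1 - e) * e^2 * (1 - e + e^2) / 4"
    by (simp add: field_simps power2_eq_square power3_eq_cube)
  moreover have "0 \<le> (1 - e) * e^2 * (1 - e + e^2) / 4" using e by (intro divide_nonneg_pos mult_nonneg_nonneg) auto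
  ultimately show ?thesis by linarith
qed

lemma ineq_b: "0 < e \<Longrightarrow> e < (1::real) \<Longrightarrow>
  (1 - e) / 2 + (1 + e) / 2 * (1 - e)^2 \<le> (1 - e^3/4) * (1 - e)"
proof -
  assume e: "0 < e" "e < 1"
  have "(1 - e^3/4) * (1 - e) - ((1 - e) / 2 + (1 + e) / 2 * (1 - e)^2) = (1 - e) * e^2 * (2 - e) / 4"
    by (simp add: field_simps power2_eq_square power3_eq_cube)
  moreover have "0 \<le> (1 - e) * e^2 * (2 - e) / 4" using e by (intro divide_nonneg_pos mult_nonneg_nonneg) auto
  ultimately show ?thesis by linarith
qed

lemma ineq_c: "0 < e \<Longrightarrow> e < (1::real) \<Longrightarrow>
  (1 - e) / 2 * (1 + e^2/2)^2 + (1 + e) / 2 \<le> (1 - e^3/4) * (1 + e^2/2)"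
proof -
  assume e: "0 < e" "e < 1"
  have "(1 - e^3/4) * (1 + e^2/2) - ((1 - e) / 2 * (1 + e^2/2)^2 + (1 + e) / 2) = e^3 * (2 - e) / 8"
    by (simp add: field_simps power2_eq_square power3_eq_cube)
  moreover have "0 \<le> e^3 * (2 - e) / 8" using e by (intro divide_nonneg_pos mult_nonneg_nonneg) auto
  ultimately show ?thesis by linarith
qed

lemma ineq_d: "0 < e \<Longrightarrow> e < (1::real) \<Longrightarrow>
  (1 - e) / 2 * (1 + e^2/2) + (1 + e) / 2 * ((1 + e^2/2) * (1 - e)) \<le> (1 - e^3/4)"
proof -
  assume e: "0 < e" "e < 1"
  have "(1 - e^3/4) - ((1 - e) / 2 * (1 + e^2/2) + (1 + e) / 2 * ((1 + e^2/2) * (1 - e))) = e / 2 + e^4 / 4"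
    by (simp add: field_simps power2_eq_square power3_eq_cube power4_eq_xxxx)
  moreover have "0 \<le> e / 2 + e^4 / 4" using e by auto
  ultimately show ?thesis by linarith
qed

lemma step_win:
  fixes e :: real
  assumes e: "0 < e" "e < 1"
  shows "(1 - e) / 2 * Psi e (Suc d) (g - 1)
       + (1 - (1 - e) / 2) * Psi e (d - 1) (if 0 < g then Suc g else if d = 0 then 1 else 0)
     \<le> (1 - e^3/4) * Psi e d g"
proof -
  define b where "b = 1 + e^2/2"
  define r where "r = 1 - e"
  have b0: "0 \<le> b" and r0: "0 \<le> r" using e by (auto simp: b_def r_def)
  have P: "Psi e d' g' = b ^ (d' + g') * r ^ g'" for d' g' by (simp add: Psi_def b_def r_def)
  have p: "1 - (1 - e) / 2 = (1 + e) / 2" by (simp add: field_simps)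
  show ?thesis
  proof (cases g)
    case 0
    show ?thesis
    proof (cases d)
      case 0
      have "(1 - e) / 2 * b + (1 + e) / 2 * (b * r) \<le> (1 - e^3/4)"
        using ineq_d[OF e] by (simp add: b_def r_def)
      then show ?thesis using \<open>g = 0\<close> 0 by (simp add: P p)
    next
      case (Suc d0)
      have X: "0 \<le> b ^ d0" using b0 by simp
      have "b ^ d0 * ((1 - e) / 2 * b^2 + (1 + e) / 2) \<le> b ^ d0 * ((1 - e^3/4) * b)"
        using ineq_c[OF e] X by (intro mult_left_mono) (auto simp: b_def)
      then show ?thesis using \<open>g = 0\<close> Suc
        by (simp add: P p algebra_simps power2_eq_square)
    qed
  next
    case (Suc g0)
    show ?thesis
    proof (cases d)
      case 0
      have X: "0 \<le> b ^ (Suc g0) * r ^ g0" using b0 r0 by simp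
      have "b ^ (Suc g0) * r ^ g0 * ((1 - e) / 2 + (1 + e) / 2 * b * r^2) \<le> b ^ (Suc g0) * r ^ g0 * ((1 - e^3/4) * r)"
        using ineq_a[OF e] X by (intro mult_left_mono) (auto simp: b_def r_def)
      then show ?thesis using Suc 0
        by (simp add: P p algebra_simps power2_eq_square)
    next
      case (Suc d0)
      have X: "0 \<le> b ^ (Suc (Suc (d0 + g0))) * r ^ g0" using b0 r0 by simp
      have "b ^ (Suc (Suc (d0 + g0))) * r ^ g0 * ((1 - e) / 2 + (1 + e) / 2 * r^2) \<le> b ^ (Suc (Suc (d0 + g0))) * r ^ g0 * ((1 - e^3/4) * r)"
        using ineq_b[OF e] X by (intro mult_left_mono) (auto simp: r_def)
      then show ?thesis using \<open>g = Suc g0\<close> Suc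
        by (simp add: P p algebra_simps power2_eq_square)
    qed
  qed
qed

lemma Psi_ge: "0 < e \<Longrightarrow> e < 1 \<Longrightarrow> ((1 - e) / (1 + e)) ^ g \<le> Psi e d g"
proof -
  assume e: "0 < e" "e < 1"
  have "((1 - e) / (1 + e)) ^ g \<le> (1 - e) ^ g"
    using e by (intro power_mono) (auto simp: divide_le_eq)
  also have "\<dots> \<le> (1 + e^2/2) ^ (d + g) * (1 - e) ^ g"
  proof -
    have "1 \<le> (1 + e^2/2) ^ (d + g)" by (rule one_le_power) simp
    moreover have "0 \<le> (1 - e) ^ g" using e by simp
    ultimately show ?thesis using mult_right_mono[of 1 "(1 + e^2/2) ^ (d + g)" "(1 - e) ^ g"] by simp
  qed
  finally show ?thesis by (simp add: Psi_def)
qed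

lemma win:
  fixes e :: real
  assumes e: "0 < e" "e < 1"
  shows "s \<le> u \<Longrightarrow> u \<le> s + k \<Longrightarrow> s + k \<le> u + n \<Longrightarrow>
    Ex ((1 - e) / 2) n (\<lambda>xs. ((1 - e) / (1 + e)) ^ go s k u d g xs) \<le> (1 - e^3/4) ^ (s + k - u) * Psi e d g"
proof (induction n arbitrary: u d g)
  case 0
  then have "u = s + k" by simp
  then show ?case using post[OF e, of s k u 0 d g] Psi_ge[OF e, of g d] by simp
next
  case (Suc n)
  show ?case
  proof (cases "u = s + k")
    case True
    then show ?thesis using post[OF e, of s k u "Suc n" d g] Psi_ge[OF e, of g d] by simp
  next
    case False
    with Suc.prems have lt: "u < s + k" by simp
    define r where "r = (1 - e) / (1 + e)"
    define th where "th = 1 - e^3/4"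
    have th0: "0 \<le> th"
    proof -
      have "e^3 \<le> 1" using e by (simp add: power_le_one)
      then show ?thesis by (simp add: th_def)
    qed
    have A: "Ex ((1 - e) / 2) n (\<lambda>xs. r ^ go s k (Suc u) d' g' xs) \<le> th ^ (s + k - Suc u) * Psi e d' g'" for d' g'
      using Suc.IH[of "Suc u"] Suc.prems lt by (simp add: r_def th_def)
    have "Ex ((1 - e) / 2) (Suc n) (\<lambda>xs. r ^ go s k u d g xs)
       = (1 - e) / 2 * Ex ((1 - e) / 2) n (\<lambda>xs. r ^ go s k (Suc u) (Suc d) (g - 1) xs)
         + (1 - (1 - e) / 2) * Ex ((1 - e) / 2) n (\<lambda>xs. r ^ go s k (Suc u) (d - 1) (if 0 < g then Suc g else if d = 0 then 1 else 0) xs)"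
      unfolding Ex_Suc using Suc.prems lt by simp
    also have "\<dots> \<le> (1 - e) / 2 * (th ^ (s + k - Suc u) * Psi e (Suc d) (g - 1))
         + (1 - (1 - e) / 2) * (th ^ (s + k - Suc u) * Psi e (d - 1) (if 0 < g then Suc g else if d = 0 then 1 else 0))"
      using A e by (intro add_mono mult_left_mono) auto
    also have "\<dots> = th ^ (s + k - Suc u) * ((1 - e) / 2 * Psi e (Suc d) (g - 1)
         + (1 - (1 - e) / 2) * Psi e (d - 1) (if 0 < g then Suc g else if d = 0 then 1 else 0))"
      by (simp add: algebra_simps)
    also have "\<dots> \<le> th ^ (s + k - Suc u) * (th * Psi e d g)"
      using step_win[OF e, of d g] th0 by (intro mult_left_mono) (auto simp: th_def)
    also have "\<dots> = th ^ (s + k - u) * Psi e d g"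
      using lt by (simp add: Suc_diff_Suc[symmetric] del: Suc_diff_Suc)
    finally show ?thesis by (simp add: r_def th_def)
  qed
qed


lemma bern_pow:
  fixes b a c :: real
  assumes "0 \<le> a" "a \<le> 1" "1 \<le> c" "1 \<le> b" "b \<le> 1 + a * (c - 1)"
  shows "b ^ d \<le> 1 + a * (c ^ d - 1)"
proof (induction d)
  case 0 then show ?case by simp
next
  case (Suc d)
  have cd: "1 \<le> c ^ d" using assms by simp
  have "b ^ Suc d = b * b ^ d" by simp
  also have "\<dots> \<le> b * (1 + a * (c ^ d - 1))" using Suc assms by (intro mult_left_mono) auto
  also have "\<dots> \<le> 1 + a * (c ^ Suc d - 1)"
  proof -
    have "a * (c - 1) \<le> c - 1" using assms by (intro mult_left_le_one_le) auto
    then have bc: "b \<le> c" using assms by simp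
    have h1: "a * (c - b) \<le> a * c ^ d * (c - b)"
      using assms cd bc by (intro mult_right_mono) (auto intro: mult_left_mono[of 1 "c^d" a, simplified])
    have h2: "(1 - a) * (b - 1) \<le> a * (c - b)"
    proof -
      have "(1 - a) * (b - 1) \<le> (1 - a) * (a * (c - 1))" using assms by (intro mult_left_mono) auto
      also have "\<dots> \<le> a * (c - b)"
      proof -
        have "a * (c - b) - (1 - a) * (a * (c - 1)) = a * (1 + a * (c - 1) - b)" by (simp add: algebra_simps)
        moreover have "0 \<le> a * (1 + a * (c - 1) - b)" using assms by simp
        ultimately show ?thesis by linarith
      qed
      finally show ?thesis .
    qed
    show ?thesis using h1 h2 by (simp add: algebra_simps)
  qed
  finally show ?case .
qed

definition G :: "real \<Rightarrow> nat \<Rightarrow> nat \<Rightarrow> real" where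
  "G e m d = (1 - e^2/2) ^ m * (1 + e) ^ d + (1 / e) * (1 - (1 - e^2/2) ^ m)"

lemma aux_lin0: "(q::real) * (T * C + M * (1 - T)) + (1 - q) * (T * 1 + M * (1 - T)) = T * (q * C + (1 - q)) + M * (1 - T)"
  by (simp add: algebra_simps)

lemma aux_lin1: "(q::real) * (T * (C * (C * D)) + M * (1 - T)) + (1 - q) * (T * D + M * (1 - T)) = T * D * (q * C^2 + (1 - q)) + M * (1 - T)"
  by (simp add: algebra_simps power2_eq_square)

lemma G_step:
  fixes e :: real
  assumes e: "0 < e" "e < 1"
  shows "(1 - e) / 2 * G e m (Suc d) + (1 - (1 - e) / 2) * G e m (d - 1) \<le> G e (Suc m) d"
proof -
  define t where "t = 1 - e^2/2"
  define c where "c = 1 + e"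
  define M where "M = 1 / e"
  define q where "q = (1 - e) / 2"
  have "e^2 \<le> 1" using e by (simp add: power_le_one)
  then have t0: "0 \<le> t" "t \<le> 1" using e by (auto simp: t_def)
  have tm: "t ^ Suc m \<le> t ^ m" using t0 by (simp add: mult_left_le_one_le)
  have M0: "0 \<le> M" using e by (simp add: M_def)
  have Gd: "G e m' d' = t ^ m' * c ^ d' + M * (1 - t ^ m')" for m' d' by (simp add: G_def t_def c_def M_def)
  show ?thesis
  proof (cases d)
    case 0
    have key: "q * c + (1 - q) - t = M * (1 - t)"
      using e by (simp add: t_def c_def M_def q_def field_simps power2_eq_square)
    have "q * G e m (Suc d) + (1 - q) * G e m (d - 1)
        = t ^ m * (q * c + (1 - q)) + M * (1 - t ^ m)"
      using 0 aux_lin0[of q "t^m" c M] by (simp add: Gd)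
    also have "\<dots> = t ^ Suc m * c ^ d + M * (1 - t ^ Suc m)"
    proof -
      have k2: "q * c + (1 - q) = t + M * (1 - t)" using key by linarith
      show ?thesis unfolding k2 using 0 by (simp add: algebra_simps)
    qed
    also have "\<dots> = G e (Suc m) d" by (simp add: Gd)
    finally show ?thesis by (simp add: q_def)
  next
    case (Suc d0)
    have key: "q * c^2 + (1 - q) = t * c"
      using e by (simp add: t_def c_def q_def field_simps power2_eq_square)
    have "q * G e m (Suc d) + (1 - q) * G e m (d - 1)
        = t ^ m * c ^ d0 * (q * c^2 + (1 - q)) + M * (1 - t ^ m)"
      using Suc aux_lin1[of q "t^m" c "c^d0" M] by (simp add: Gd)
    also have "\<dots> = t ^ Suc m * c ^ d + M * (1 - t ^ m)"
      using Suc key by (simp add: algebra_simps)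
    also have "\<dots> \<le> t ^ Suc m * c ^ d + M * (1 - t ^ Suc m)"
      using tm M0 by (intro add_left_mono mult_left_mono) auto
    also have "\<dots> = G e (Suc m) d" by (simp add: Gd)
    finally show ?thesis by (simp add: q_def)
  qed
qed

lemma aux_lin2: "(q::real) * (X * (1 + a * (G1 - 1))) + (1 - q) * (X * (1 + a * (G2 - 1))) = X * (1 + a * ((q * G1 + (1 - q) * G2) - 1))"
  by (simp add: algebra_simps)

lemma pre:
  fixes e :: real
  assumes e: "0 < e" "e < 1"
  shows "u \<le> s \<Longrightarrow> s + k \<le> u + n \<Longrightarrow>
    Ex ((1 - e) / 2) n (\<lambda>xs. ((1 - e) / (1 + e)) ^ go s k u d 0 xs)
      \<le> (1 - e^3/4) ^ k * (1 + e / 2 * (G e (s - u) d - 1))"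
proof (induction n arbitrary: u d)
  case 0
  then have "u = s" "k = 0" by auto
  then show ?case
    using win[OF e, of s u k 0 d 0] bern_pow[of "e/2" "1+e" "1 + e^2/2" d] e
    by (simp add: Psi_def G_def power2_eq_square)
next
  case (Suc n)
  define th where "th = 1 - e^3/4"
  have th0: "0 \<le> th"
  proof -
    have "e^3 \<le> 1" using e by (simp add: power_le_one)
    then show ?thesis by (simp add: th_def)
  qed
  show ?case
  proof (cases "u = s")
    case True
    have "Ex ((1 - e) / 2) (Suc n) (\<lambda>xs. ((1 - e) / (1 + e)) ^ go s k u d 0 xs) \<le> th ^ k * Psi e d 0"
      using win[OF e, of s u k "Suc n" d 0] True Suc.prems by (simp add: th_def)
    also have "\<dots> \<le> th ^ k * (1 + e / 2 * (G e (s - u) d - 1))"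
      using bern_pow[of "e/2" "1+e" "1 + e^2/2" d] e th0 True
      by (intro mult_left_mono) (auto simp: Psi_def G_def power2_eq_square)
    finally show ?thesis by (simp add: th_def)
  next
    case False
    with Suc.prems have lt: "u < s" by simp
    define r where "r = (1 - e) / (1 + e)"
    define B where "B = (\<lambda>m d. th ^ k * (1 + e / 2 * (G e m d - 1)))"
    have A: "Ex ((1 - e) / 2) n (\<lambda>xs. r ^ go s k (Suc u) d' 0 xs) \<le> B (s - Suc u) d'" for d'
      using Suc.IH[of "Suc u" d'] Suc.prems lt by (simp add: r_def th_def B_def)
    have "Ex ((1 - e) / 2) (Suc n) (\<lambda>xs. r ^ go s k u d 0 xs)
       = (1 - e) / 2 * Ex ((1 - e) / 2) n (\<lambda>xs. r ^ go s k (Suc u) (Suc d) 0 xs)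
         + (1 - (1 - e) / 2) * Ex ((1 - e) / 2) n (\<lambda>xs. r ^ go s k (Suc u) (d - 1) 0 xs)"
      unfolding Ex_Suc using lt by simp
    also have "\<dots> \<le> (1 - e) / 2 * B (s - Suc u) (Suc d) + (1 - (1 - e) / 2) * B (s - Suc u) (d - 1)"
      using A e by (intro add_mono mult_left_mono) auto
    also have "\<dots> = th ^ k * (1 + e / 2 * (((1 - e) / 2 * G e (s - Suc u) (Suc d) + (1 - (1 - e) / 2) * G e (s - Suc u) (d - 1)) - 1))"
      unfolding B_def by (rule aux_lin2)
    also have "\<dots> \<le> th ^ k * (1 + e / 2 * (G e (Suc (s - Suc u)) d - 1))"
      using G_step[OF e, of "s - Suc u" d] th0 e by (intro mult_left_mono add_left_mono) auto
    also have "Suc (s - Suc u) = s - u" using lt by simp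
    finally show ?thesis by (simp add: r_def th_def)
  qed
qed

lemma walk_bound:
  fixes e :: real
  assumes e: "0 < e" "e < 1" and T: "s + k \<le> T"
  shows "Ex ((1 - e) / 2) T (\<lambda>xs. ((1 - e) / (1 + e)) ^ go s k 0 0 0 xs) \<le> 3 / 2 * (1 - e^3/4) ^ k"
proof -
  define t where "t = 1 - e^2/2"
  have "e^2 \<le> 1" using e by (simp add: power_le_one)
  then have t0: "0 \<le> t" "t \<le> 1" using e by (auto simp: t_def)
  have ts: "0 \<le> t ^ s" "t ^ s \<le> 1" using t0 by (auto simp: power_le_one)
  have M1: "1 \<le> 1 / e" using e by simp
  have "G e s 0 = t ^ s * 1 + (1 / e) * (1 - t ^ s)" by (simp add: G_def t_def)
  also have "\<dots> \<le> (1 / e) * t ^ s + (1 / e) * (1 - t ^ s)"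
    using mult_right_mono[OF M1 ts(1)] by simp
  also have "\<dots> = 1 / e" by (simp add: algebra_simps)
  finally have Gs: "G e s 0 \<le> 1 / e" .
  have th0: "0 \<le> (1 - e^3/4) ^ k"
  proof -
    have "e^3 \<le> 1" using e by (simp add: power_le_one)
    then show ?thesis by simp
  qed
  have "Ex ((1 - e) / 2) T (\<lambda>xs. ((1 - e) / (1 + e)) ^ go s k 0 0 0 xs)
     \<le> (1 - e^3/4) ^ k * (1 + e / 2 * (G e s 0 - 1))"
    using pre[OF e, of 0 s k T 0] T by simp
  also have "\<dots> \<le> (1 - e^3/4) ^ k * (3 / 2)"
  proof (intro mult_left_mono th0)
    have "e / 2 * (G e s 0 - 1) \<le> e / 2 * (1 / e)" using Gs e by (intro mult_left_mono) auto
    also have "\<dots> = 1 / 2" using e by simp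
    finally show "1 + e / 2 * (G e s 0 - 1) \<le> 3 / 2" by simp
  qed
  finally show ?thesis by simp
qed


definition xv :: "bool list \<Rightarrow> nat \<Rightarrow> int" where
  "xv w i = (if w ! (i - 1) then -1 else 1)"

definition sm :: "bool list \<Rightarrow> nat \<Rightarrow> nat \<Rightarrow> int" where
  "sm w a b = (\<Sum>i\<in>{a..b}. xv w i)"

definition catalan :: "bool list \<Rightarrow> nat \<Rightarrow> bool" where
  "catalan w h \<longleftrightarrow> (\<forall>a b. 1 \<le> a \<longrightarrow> a \<le> h \<longrightarrow> h \<le> b \<longrightarrow> b \<le> length w \<longrightarrow> 0 < sm w a b)"

lemma sm_split: "a \<le> h \<Longrightarrow> h \<le> b \<Longrightarrow> sm w a b = sm w a h + sm w (Suc h) b"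
  unfolding sm_def using sum.ub_add_nat[of a h "\<lambda>i. xv w i" "b - h"] by simp

lemma sm_snoc: "a \<le> Suc u \<Longrightarrow> sm w a (Suc u) = sm w a u + xv w (Suc u)"
  unfolding sm_def by (cases "a = Suc u") (auto simp: atLeastAtMostSuc_conv)

lemma sm_single: "sm w a a = xv w a"
  by (simp add: sm_def)

lemma sm_empty: "b < a \<Longrightarrow> sm w a b = 0"
  by (simp add: sm_def)

lemma xv_le1: "xv w i \<le> 1" by (simp add: xv_def)

fun dd :: "bool list \<Rightarrow> nat \<Rightarrow> nat" where
  "dd w 0 = 0"
| "dd w (Suc u) = (if w ! u then Suc (dd w u) else dd w u - 1)"

fun gg :: "nat \<Rightarrow> nat \<Rightarrow> bool list \<Rightarrow> nat \<Rightarrow> nat" where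
  "gg s k w 0 = 0"
| "gg s k w (Suc u) = (if w ! u then gg s k w u - 1 else if 0 < gg s k w u then Suc (gg s k w u)
     else if dd w u = 0 \<and> s \<le> u \<and> u < s + k then 1 else 0)"

lemma go_link: "u \<le> length w \<Longrightarrow> go s k u (dd w u) (gg s k w u) (drop u w) = go s k 0 0 0 w"
proof (induction u)
  case 0 then show ?case by simp
next
  case (Suc u)
  then have "drop u w = w ! u # drop (Suc u) w" by (simp add: Cons_nth_drop_Suc)
  then have "go s k u (dd w u) (gg s k w u) (drop u w) = go s k (Suc u) (dd w (Suc u)) (gg s k w (Suc u)) (drop (Suc u) w)"
    by simp
  with Suc show ?case by simp
qed

lemma go_gg: "go s k 0 0 0 w = gg s k w (length w)"
  using go_link[of "length w" w s k] by simp

lemma inv_dd: "u \<le> length w \<Longrightarrow> 1 \<le> a \<Longrightarrow> a \<le> u \<Longrightarrow> - int (dd w u) \<le> sm w a u"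
proof (induction u arbitrary: a)
  case 0 then show ?case by simp
next
  case (Suc u)
  show ?case
  proof (cases "a = Suc u")
    case True
    then show ?thesis by (auto simp: sm_single xv_def)
  next
    case False
    then have a: "a \<le> u" using Suc by simp
    have IH: "- int (dd w u) \<le> sm w a u" using Suc a by simp
    show ?thesis using IH by (auto simp: sm_snoc Suc.prems xv_def)
  qed
qed

lemma inv_gg: "u \<le> length w \<Longrightarrow> 0 < gg s k w u \<Longrightarrow> (\<exists>h. Suc s \<le> h \<and> h \<le> s + k \<and> h \<le> u \<and>
   (\<forall>a. 1 \<le> a \<longrightarrow> a \<le> h \<longrightarrow> 1 \<le> sm w a h) \<and> (\<forall>b. h \<le> b \<longrightarrow> b \<le> u \<longrightarrow> 1 \<le> sm w h b) \<and>
   int (gg s k w u) = sm w h u)"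
proof (induction u)
  case 0 then show ?case by simp
next
  case (Suc u)
  show ?case
  proof (cases "0 < gg s k w u")
    case True
    then obtain h where h: "Suc s \<le> h" "h \<le> s + k" "h \<le> u" "\<forall>a. 1 \<le> a \<longrightarrow> a \<le> h \<longrightarrow> 1 \<le> sm w a h"
      "\<forall>b. h \<le> b \<longrightarrow> b \<le> u \<longrightarrow> 1 \<le> sm w h b" "int (gg s k w u) = sm w h u"
      using Suc by auto
    have g: "int (gg s k w (Suc u)) = sm w h (Suc u)"
      using h(3,6) True by (auto simp: sm_snoc xv_def of_nat_diff)
    show ?thesis
    proof (intro exI[of _ h] conjI allI impI)
      fix b assume "h \<le> b" "b \<le> Suc u"
      then show "1 \<le> sm w h b" using h(5) g Suc.prems by (cases "b = Suc u") auto
    qed (use h g in auto)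
  next
    case False
    then have "gg s k w (Suc u) = 1" "\<not> w ! u" "dd w u = 0" "s \<le> u" "u < s + k" using Suc.prems
      by (auto split: if_splits)
    moreover have "\<forall>a. 1 \<le> a \<longrightarrow> a \<le> Suc u \<longrightarrow> 1 \<le> sm w a (Suc u)"
    proof (intro allI impI)
      fix a assume a: "1 \<le> a" "a \<le> Suc u"
      show "1 \<le> sm w a (Suc u)"
      proof (cases "a = Suc u")
        case True then show ?thesis using \<open>\<not> w ! u\<close> by (simp add: sm_single xv_def)
      next
        case False
        then have "0 \<le> sm w a u" using inv_dd[of u w a] Suc.prems a \<open>dd w u = 0\<close> by simp
        then show ?thesis using a \<open>\<not> w ! u\<close> by (simp add: sm_snoc xv_def)
      qed
    qed
    ultimately show ?thesis
      by (intro exI[of _ "Suc u"]) (auto simp: sm_single xv_def le_Suc_eq)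
  qed
qed

lemma go_catalan:
  assumes "0 < go s k 0 0 0 w"
  shows "\<exists>h. Suc s \<le> h \<and> h \<le> s + k \<and> catalan w h"
proof -
  obtain h where h: "Suc s \<le> h" "h \<le> s + k" "h \<le> length w" "\<forall>a. 1 \<le> a \<longrightarrow> a \<le> h \<longrightarrow> 1 \<le> sm w a h"
      "\<forall>b. h \<le> b \<longrightarrow> b \<le> length w \<longrightarrow> 1 \<le> sm w h b"
    using inv_gg[of "length w" w s k] assms unfolding go_gg by blast
  have "1 \<le> sm w h h" using h(3,5) by blast
  then have xh: "xv w h = 1" using xv_le1[of w h] by (simp add: sm_single)
  have "catalan w h" unfolding catalan_def
  proof (intro allI impI)
    fix a b assume ab: "1 \<le> a" "a \<le> h" "h \<le> b" "b \<le> length w"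
    have 1: "sm w a b = sm w a h + sm w (Suc h) b" using sm_split[OF ab(2) ab(3)] .
    have 2: "sm w h b = xv w h + sm w (Suc h) b"
      using sm_split[of h h b w] ab(3) by (simp add: sm_single)
    have 3: "1 \<le> sm w a h" using h(4) ab by blast
    have 4: "1 \<le> sm w h b" using h(5) ab by blast
    show "0 < sm w a b" using 1 2 3 4 xh by linarith
  qed
  with h show ?thesis by auto
qed


locale fk =
  fixes w :: "bool list" and F :: fork
  assumes fk: "is_fork w F"
begin

lemma no_into_root: "(u, root F) \<notin> edges F" using fk by (simp add: is_fork_def)
lemma uniq_par: "v \<in> verts F \<Longrightarrow> v \<noteq> root F \<Longrightarrow> (u, v) \<in> edges F \<Longrightarrow> (u', v) \<in> edges F \<Longrightarrow> u = u'"
  using fk unfolding is_fork_def by blast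
lemma edges_sub: "(u, v) \<in> edges F \<Longrightarrow> u \<in> verts F \<and> v \<in> verts F" using fk by (auto simp: is_fork_def)
lemma root_in: "root F \<in> verts F" using fk by (simp add: is_fork_def)
lemma reach: "v \<in> verts F \<Longrightarrow> (root F, v) \<in> (edges F)\<^sup>*" using fk by (simp add: is_fork_def)
lemma lab_root: "lab F (root F) = 0" using fk by (simp add: is_fork_def)
lemma lab_incr: "(u, v) \<in> (edges F)\<^sup>+ \<Longrightarrow> lab F u < lab F v" using fk by (simp add: is_fork_def)
lemma lab_le: "v \<in> verts F \<Longrightarrow> lab F v \<le> length w" using fk by (simp add: is_fork_def)
lemma F3: "honest w i \<Longrightarrow> card {v\<in>verts F. lab F v = i} = 1" using fk by (simp add: is_fork_def)
lemma F4: "honest w i \<Longrightarrow> honest w j \<Longrightarrow> i < j \<Longrightarrow> u \<in> verts F \<Longrightarrow> v \<in> verts F \<Longrightarrow>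
    lab F u = i \<Longrightarrow> lab F v = j \<Longrightarrow> depth F u < depth F v" using fk unfolding is_fork_def by blast

lemma relpow_uniq: "(root F, v) \<in> edges F ^^ m \<Longrightarrow> (root F, v) \<in> edges F ^^ m' \<Longrightarrow> m = m'"
proof (induction m arbitrary: v m')
  case 0
  then have v: "v = root F" by simp
  show ?case
  proof (cases m')
    case (Suc m'')
    then obtain x where "(x, v) \<in> edges F" using 0 relpow_Suc_E by metis
    then show ?thesis using v no_into_root by simp
  qed simp
next
  case (Suc m)
  obtain x where x: "(root F, x) \<in> edges F ^^ m" "(x, v) \<in> edges F" using Suc.prems(1) relpow_Suc_E by metis
  have vr: "v \<noteq> root F" using x(2) no_into_root by auto
  have vV: "v \<in> verts F" using x(2) edges_sub by auto
  show ?case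
  proof (cases m')
    case 0 then show ?thesis using Suc.prems(2) vr by simp
  next
    case (Suc m'')
    then obtain x' where x': "(root F, x') \<in> edges F ^^ m''" "(x', v) \<in> edges F" using Suc.prems(2) relpow_Suc_E by metis
    have "x = x'" using uniq_par[OF vV vr x(2) x'(2)] .
    then show ?thesis using Suc.IH[OF x(1)] x'(1) Suc by simp
  qed
qed

lemma depth_eq: "(root F, v) \<in> edges F ^^ m \<Longrightarrow> depth F v = m"
  unfolding depth_def by (rule Least_equality) (auto dest: relpow_uniq)

lemma tine_relpow: "tine F p \<Longrightarrow> i < length p \<Longrightarrow> (root F, p ! i) \<in> edges F ^^ i"
proof (induction i)
  case 0 then show ?case by (auto simp: tine_def hd_conv_nth)
next
  case (Suc i)
  then have "(p ! i, p ! Suc i) \<in> edges F" by (simp add: tine_def)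
  with Suc show ?case by auto
qed

lemma tine_depth: "tine F p \<Longrightarrow> i < length p \<Longrightarrow> depth F (p ! i) = i"
  using tine_relpow depth_eq by blast

lemma tine_prefix_eq: "tine F p \<Longrightarrow> tine F q \<Longrightarrow> i < length p \<Longrightarrow> i < length q \<Longrightarrow> p ! i = q ! i \<Longrightarrow>
   k \<le> i \<Longrightarrow> p ! k = q ! k"
proof (induction i arbitrary: k)
  case 0 then show ?case by simp
next
  case (Suc i)
  have e1: "(p ! i, p ! Suc i) \<in> edges F" "(q ! i, q ! Suc i) \<in> edges F" using Suc.prems by (auto simp: tine_def)
  have vr: "p ! Suc i \<noteq> root F" using e1(1) no_into_root by auto
  have vV: "p ! Suc i \<in> verts F" using e1(1) edges_sub by auto
  have "p ! i = q ! i" using uniq_par[OF vV vr e1(1)] e1(2) Suc.prems(5) by simp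
  then show ?case using Suc by (cases "k = Suc i") auto
qed

lemma tine_lab_mono: "tine F p \<Longrightarrow> i < j \<Longrightarrow> j < length p \<Longrightarrow> lab F (p ! i) < lab F (p ! j)"
proof -
  assume p: "tine F p"
  have "i < j \<Longrightarrow> j < length p \<Longrightarrow> (p ! i, p ! j) \<in> (edges F)\<^sup>+" for j
  proof (induction j)
    case 0 then show ?case by simp
  next
    case (Suc j)
    have e: "(p ! j, p ! Suc j) \<in> edges F" using p Suc.prems by (simp add: tine_def)
    show ?case
    proof (cases "i = j")
      case True then show ?thesis using e by auto
    next
      case False then show ?thesis using Suc e by (meson less_SucE Suc_lessD trancl.trancl_into_trancl)
    qed
  qed
  then show "i < j \<Longrightarrow> j < length p \<Longrightarrow> lab F (p ! i) < lab F (p ! j)" using lab_incr by blast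
qed

lemma tine_lab_inj: "tine F p \<Longrightarrow> i < length p \<Longrightarrow> j < length p \<Longrightarrow> lab F (p ! i) = lab F (p ! j) \<Longrightarrow> i = j"
  using tine_lab_mono by (metis less_irrefl nat_neq_iff)

lemma relpow_tine: "(root F, v) \<in> edges F ^^ m \<Longrightarrow> \<exists>p. tine F p \<and> length p = Suc m \<and> last p = v"
proof (induction m arbitrary: v)
  case 0
  then show ?case using root_in by (intro exI[of _ "[root F]"]) (simp add: tine_def)
next
  case (Suc m)
  obtain x where x: "(root F, x) \<in> edges F ^^ m" "(x, v) \<in> edges F" using Suc.prems relpow_Suc_E by metis
  obtain p where p: "tine F p" "length p = Suc m" "last p = x" using Suc.IH[OF x(1)] by blast
  have vV: "v \<in> verts F" using x(2) edges_sub by auto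
  have "tine F (p @ [v])" unfolding tine_def
  proof (intro conjI allI impI)
    show "hd (p @ [v]) = root F" using p(1) by (auto simp: tine_def)
    show "set (p @ [v]) \<subseteq> verts F" using p(1) vV by (auto simp: tine_def)
    fix i assume i: "Suc i < length (p @ [v])"
    show "((p @ [v]) ! i, (p @ [v]) ! Suc i) \<in> edges F"
    proof (cases "Suc i < length p")
      case True then show ?thesis using p(1) by (simp add: tine_def nth_append)
    next
      case False
      then have "i = m" using i p(2) by simp
      have "p ! m = x" using p by (metis diff_Suc_1 last_conv_nth list.size(3) nat.distinct(1))
      then show ?thesis using \<open>i = m\<close> p x(2) by (simp add: nth_append)
    qed
  qed simp
  then show ?case using p by (intro exI[of _ "p @ [v]"]) simp
qed

lemma vert_tine: "v \<in> verts F \<Longrightarrow> \<exists>p. tine F p \<and> length p = Suc (depth F v) \<and> last p = v"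
proof -
  assume "v \<in> verts F"
  then obtain m where m: "(root F, v) \<in> edges F ^^ m" using reach rtrancl_power by blast
  then show ?thesis using relpow_tine depth_eq by blast
qed

lemma max_tine_depth: "max_tine F q \<Longrightarrow> v \<in> verts F \<Longrightarrow> depth F v \<le> length q - 1"
  using vert_tine unfolding max_tine_def by fastforce

lemma depth0: "v \<in> verts F \<Longrightarrow> depth F v = 0 \<Longrightarrow> v = root F"
proof -
  assume "v \<in> verts F" "depth F v = 0"
  then obtain p where "tine F p" "length p = 1" "last p = v" using vert_tine by fastforce
  then show ?thesis by (cases p) (auto simp: tine_def)
qed

lemma lab_pos: "v \<in> verts F \<Longrightarrow> v \<noteq> root F \<Longrightarrow> 0 < lab F v"
proof -
  assume v: "v \<in> verts F" "v \<noteq> root F"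
  then have "(root F, v) \<in> (edges F)\<^sup>+" using reach[OF v(1)] by (simp add: rtrancl_eq_or_trancl)
  then show ?thesis using lab_incr lab_root by fastforce
qed

definition vh :: "nat \<Rightarrow> nat" where "vh i = (THE v. v \<in> verts F \<and> lab F v = i)"

lemma vh_ex: "honest w i \<Longrightarrow> \<exists>!v. v \<in> verts F \<and> lab F v = i"
proof -
  assume "honest w i"
  then have "card {v\<in>verts F. lab F v = i} = 1" by (rule F3)
  then obtain x where x: "{v\<in>verts F. lab F v = i} = {x}" by (rule card_1_singletonE)
  show ?thesis
  proof (rule ex1I[of _ x])
    show "x \<in> verts F \<and> lab F x = i" using x by blast
    fix y assume "y \<in> verts F \<and> lab F y = i"
    then have "y \<in> {v\<in>verts F. lab F v = i}" by simp
    then show "y = x" using x by simp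
  qed
qed

lemma vh: "honest w i \<Longrightarrow> vh i \<in> verts F \<and> lab F (vh i) = i"
  unfolding vh_def using vh_ex by (rule theI')

lemma vh_uniq: "honest w i \<Longrightarrow> v \<in> verts F \<Longrightarrow> lab F v = i \<Longrightarrow> v = vh i"
  using vh vh_ex by blast

lemma honest_pos: "honest w i \<Longrightarrow> 1 \<le> i" by (simp add: honest_def)

lemma depth_vh_pos: "honest w i \<Longrightarrow> 0 < depth F (vh i)"
proof (rule ccontr)
  assume h: "honest w i" "\<not> 0 < depth F (vh i)"
  then have "vh i = root F" using vh depth0 by blast
  then show False using vh[OF h(1)] lab_root honest_pos[OF h(1)] by simp
qed

end

lemma incr_count:
  fixes f :: "nat \<Rightarrow> nat"
  assumes mono: "\<And>x y. x \<in> S \<Longrightarrow> y \<in> S \<Longrightarrow> x < y \<Longrightarrow> f x < f y" and a: "a \<in> S"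
  shows "b \<in> S \<Longrightarrow> a \<le> b \<Longrightarrow> f a + card {x\<in>S. a < x \<and> x \<le> b} \<le> f b"
proof (induction b rule: less_induct)
  case (less b)
  show ?case
  proof (cases "a = b")
    case True
    then have "{x\<in>S. a < x \<and> x \<le> b} = {}" by auto
    then show ?thesis using True by simp
  next
    case False
    define b' where "b' = Max {x\<in>S. a \<le> x \<and> x < b}"
    have fin: "finite {x\<in>S. a \<le> x \<and> x < b}" by simp
    have ne: "a \<in> {x\<in>S. a \<le> x \<and> x < b}" using a less.prems False by auto
    have b': "b' \<in> S" "a \<le> b'" "b' < b" using Max_in[OF fin] ne unfolding b'_def by blast+
    have bmax: "x \<in> S \<Longrightarrow> a \<le> x \<Longrightarrow> x < b \<Longrightarrow> x \<le> b'" for x using Max_ge[OF fin] unfolding b'_def by blast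
    have eq: "{x\<in>S. a < x \<and> x \<le> b} = insert b {x\<in>S. a < x \<and> x \<le> b'}"
      using b' less.prems False bmax by force
    have "card {x\<in>S. a < x \<and> x \<le> b} = Suc (card {x\<in>S. a < x \<and> x \<le> b'})"
      unfolding eq using b' by (subst card_insert_disjoint) auto
    moreover have "f a + card {x\<in>S. a < x \<and> x \<le> b'} \<le> f b'" using less.IH[of b'] b' by blast
    moreover have "f b' < f b" using mono b' less.prems by blast
    ultimately show ?thesis by simp
  qed
qed

lemma sm_count: "1 \<le> a \<Longrightarrow> b \<le> length w \<Longrightarrow>
  sm w a b = int (card {x\<in>{a..b}. honest w x}) - int (card {x\<in>{a..b}. \<not> honest w x})"
proof -
  assume ab: "1 \<le> a" "b \<le> length w"
  have "sm w a b = (\<Sum>i\<in>{a..b}. if honest w i then 1 else -1)"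
    unfolding sm_def using ab by (intro sum.cong) (auto simp: xv_def honest_def)
  also have "\<dots> = int (card {x\<in>{a..b}. honest w x}) - int (card {x\<in>{a..b}. \<not> honest w x})"
    by (simp add: sum.If_cases Int_def)
  finally show ?thesis .
qed


context fk
begin

lemma tine_set: "tine F q \<Longrightarrow> m < length q \<Longrightarrow> q ! m \<in> verts F"
  unfolding tine_def by (meson nth_mem subsetD)

lemma tine_take: "tine F q \<Longrightarrow> 0 < m \<Longrightarrow> m \<le> length q \<Longrightarrow> tine F (take m q)"
  unfolding tine_def by (auto dest: in_set_takeD)

lemma tine_0: "tine F q \<Longrightarrow> q ! 0 = root F"
  unfolding tine_def by (metis hd_conv_nth)

definition fS :: "nat \<Rightarrow> nat" where "fS x = (if x = 0 then 0 else depth F (vh x))"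

lemma fS_mono: "x \<in> {0} \<union> {i. honest w i} \<Longrightarrow> y \<in> {0} \<union> {i. honest w i} \<Longrightarrow> x < y \<Longrightarrow> fS x < fS y"
proof -
  assume xy: "x \<in> {0} \<union> {i. honest w i}" "y \<in> {0} \<union> {i. honest w i}" "x < y"
  then have hy: "honest w y" by auto
  show "fS x < fS y"
  proof (cases "x = 0")
    case True then show ?thesis using depth_vh_pos[OF hy] xy by (simp add: fS_def)
  next
    case False
    then have hx: "honest w x" using xy by auto
    have "depth F (vh x) < depth F (vh y)" using F4[OF hx hy xy(3)] vh[OF hx] vh[OF hy] by blast
    then show ?thesis using False xy by (simp add: fS_def)
  qed
qed

lemma cat_in:
  assumes cat: "catalan w h" and h1: "1 \<le> h"
  shows "h \<le> \<tau> \<Longrightarrow> \<tau> \<le> length w \<Longrightarrow> tine F q \<Longrightarrow> (\<forall>v\<in>set q. lab F v \<le> \<tau>) \<Longrightarrow>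
    (\<forall>i. honest w i \<longrightarrow> i \<le> \<tau> \<longrightarrow> depth F (vh i) \<le> length q - 1) \<Longrightarrow> vh h \<in> set q"
proof (induction \<tau> arbitrary: q rule: less_induct)
  case (less \<tau>)
  note q = less.prems(3)
  show ?case
  proof (rule ccontr)
    assume nq: "vh h \<notin> set q"
    show False
    proof (cases "\<exists>m<length q. honest w (lab F (q ! m)) \<and> h < lab F (q ! m)")
      case True
      then obtain m where m: "m < length q" "honest w (lab F (q ! m))" "h < lab F (q ! m)" by blast
      define i where "i = lab F (q ! m)"
      have qm: "q ! m = vh i" using vh_uniq[OF m(2) tine_set[OF q m(1)]] by (simp add: i_def)
      have dm: "depth F (vh i) = m" using tine_depth[OF q m(1)] qm by simp
      have m0: "m \<noteq> 0" using m(3) tine_0[OF q] lab_root by (cases m) auto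
      have itau: "i \<le> \<tau>" using less.prems(4) m(1) by (simp add: i_def)
      have tp: "tine F (take m q)" using tine_take[OF q] m m0 by simp
      have lp: "\<forall>v\<in>set (take m q). lab F v \<le> i - 1"
      proof
        fix v assume "v \<in> set (take m q)"
        then obtain k where k: "k < m" "v = q ! k" using m(1) by (auto simp: in_set_conv_nth)
        then show "lab F v \<le> i - 1" using tine_lab_mono[OF q k(1) m(1)] by (simp add: i_def)
      qed
      have vp: "\<forall>i'. honest w i' \<longrightarrow> i' \<le> i - 1 \<longrightarrow> depth F (vh i') \<le> length (take m q) - 1"
      proof (intro allI impI)
        fix i' assume i': "honest w i'" "i' \<le> i - 1"
        have "i' < i" using i' m(3) by (simp add: i_def)
        then have "depth F (vh i') < depth F (vh i)"
          using F4[OF i'(1) m(2)] vh[OF i'(1)] vh[OF m(2)] by (simp add: i_def)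
        then show "depth F (vh i') \<le> length (take m q) - 1" using dm m(1) by simp
      qed
      have "vh h \<in> set (take m q)"
        using less.IH[of "i - 1" "take m q"] tp lp vp m(3) itau less.prems(2) by (simp add: i_def)
      then show False using nq by (meson in_set_takeD)
    next
      case False
      define S' where "S' = {0} \<union> {i. honest w i}"
      define I where "I = {m. m < length q \<and> lab F (q ! m) \<in> S'}"
      have finI: "finite I" by (simp add: I_def)
      have I0: "0 \<in> I" using tine_0[OF q] lab_root q by (auto simp: I_def S'_def tine_def)
      define l where "l = Max I"
      have lI: "l \<in> I" using Max_in[OF finI] I0 l_def by blast
      have lmax: "m \<in> I \<Longrightarrow> m \<le> l" for m using Max_ge[OF finI] l_def by blast
      define j where "j = lab F (q ! l)"
      have ll: "l < length q" using lI by (simp add: I_def)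
      have jS: "j \<in> S'" using lI by (simp add: I_def j_def)
      have jh: "j < h"
      proof (cases "j = 0")
        case True then show ?thesis using h1 by simp
      next
        case False
        then have hj: "honest w j" using jS by (simp add: S'_def)
        have "j \<le> h" using \<open>\<not> (\<exists>m<length q. honest w (lab F (q ! m)) \<and> h < lab F (q ! m))\<close> ll hj
          by (auto simp: j_def)
        moreover have "j \<noteq> h"
        proof
          assume "j = h"
          then have "q ! l = vh h" using vh_uniq[OF hj tine_set[OF q ll]] by (simp add: j_def)
          then show False using nq ll by (metis nth_mem)
        qed
        ultimately show ?thesis by simp
      qed
      have fj: "fS j = l"
      proof (cases "j = 0")
        case True
        then have "q ! l = root F" using lab_pos[OF tine_set[OF q ll]] by (auto simp: j_def)
        then have "l = 0" using tine_depth[OF q ll] depth_eq[of "root F" 0] by simp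
        then show ?thesis using True by (simp add: fS_def)
      next
        case False
        then have hj: "honest w j" using jS by (simp add: S'_def)
        have "q ! l = vh j" using vh_uniq[OF hj tine_set[OF q ll]] by (simp add: j_def)
        then show ?thesis using tine_depth[OF q ll] False by (simp add: fS_def)
      qed
      define Aset where "Aset = {x\<in>{Suc j..\<tau>}. \<not> honest w x}"
      have card_pos: "length q - 1 - l \<le> card Aset"
      proof -
        have "card {l<..<length q} \<le> card Aset"
        proof (rule card_inj_on_le[where f = "\<lambda>m. lab F (q ! m)"])
          show "inj_on (\<lambda>m. lab F (q ! m)) {l<..<length q}"
            using tine_lab_inj[OF q] by (auto simp: inj_on_def)
          show "finite Aset" by (simp add: Aset_def)
          show "(\<lambda>m. lab F (q ! m)) ` {l<..<length q} \<subseteq> Aset"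
          proof
            fix x assume "x \<in> (\<lambda>m. lab F (q ! m)) ` {l<..<length q}"
            then obtain m where m: "l < m" "m < length q" "x = lab F (q ! m)" by auto
            have "m \<notin> I" using lmax m(1) by fastforce
            then have "x \<notin> S'" using m by (simp add: I_def)
            moreover have "j < x" using tine_lab_mono[OF q m(1) m(2)] m(3) by (simp add: j_def)
            moreover have "x \<le> \<tau>" using less.prems(4) m(2,3) by simp
            ultimately show "x \<in> Aset" by (simp add: Aset_def S'_def)
          qed
        qed
        then show ?thesis by simp
      qed
      define Hset where "Hset = {x\<in>{Suc j..\<tau>}. honest w x}"
      define istar where "istar = Max {x\<in>S'. x \<le> \<tau>}"
      have finS: "finite {x\<in>S'. x \<le> \<tau>}" by simp
      have jin: "j \<in> {x\<in>S'. x \<le> \<tau>}" using jS jh less.prems(1) by simp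
      have is_in: "istar \<in> S'" "istar \<le> \<tau>" using Max_in[OF finS] jin istar_def by blast+
      have is_ge: "x \<in> S' \<Longrightarrow> x \<le> \<tau> \<Longrightarrow> x \<le> istar" for x using Max_ge[OF finS] istar_def by blast
      have ji: "j \<le> istar" using is_ge jS jh less.prems(1) by simp
      have Heq: "{x\<in>S'. j < x \<and> x \<le> istar} = Hset"
        using is_ge is_in by (auto simp: Hset_def S'_def)
      have "fS j + card {x\<in>S'. j < x \<and> x \<le> istar} \<le> fS istar"
        using incr_count[of S' fS j istar] fS_mono jS is_in ji unfolding S'_def by blast
      then have c1: "l + card Hset \<le> fS istar" using Heq fj by simp
      have c2: "fS istar \<le> length q - 1"
      proof (cases "istar = 0")
        case True then show ?thesis by (simp add: fS_def)
      next
        case False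
        then have "honest w istar" using is_in by (simp add: S'_def)
        then show ?thesis using less.prems(5) is_in False by (simp add: fS_def)
      qed
      have "card Hset \<le> card Aset" using c1 c2 card_pos ll by linarith
      moreover have "0 < sm w (Suc j) \<tau>"
        using cat less.prems(1,2) jh unfolding catalan_def by simp
      moreover have "sm w (Suc j) \<tau> = int (card Hset) - int (card Aset)"
        using sm_count[of "Suc j" \<tau> w] less.prems(2) by (simp add: Hset_def Aset_def)
      ultimately show False by linarith
    qed
  qed
qed

lemma catalan_honest: "catalan w h \<Longrightarrow> 1 \<le> h \<Longrightarrow> h \<le> length w \<Longrightarrow> honest w h"
  unfolding catalan_def honest_def by (auto simp: sm_single xv_def split: if_splits dest!: spec[of _ h])

lemma settled:
  assumes cat: "catalan w h" and h: "1 \<le> h" "s < h" "h \<le> length w"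
  shows "\<not> not_settled F s"
proof
  assume "not_settled F s"
  then obtain p q where pq: "max_tine F p" "max_tine F q"
    "(\<exists>u\<in>set p. \<exists>v\<in>set q. lab F u = s \<and> lab F v = s \<and> u \<noteq> v) \<or>
      ((\<exists>u\<in>set p. lab F u = s) \<and> \<not> (\<exists>v\<in>set q. lab F v = s))"
    unfolding not_settled_def by blast
  have hh: "honest w h" using catalan_honest cat h by simp
  have vin: "vh h \<in> set t" if t: "max_tine F t" for t
  proof -
    have tt: "tine F t" using t by (simp add: max_tine_def)
    have "\<forall>v\<in>set t. lab F v \<le> length w" using tt lab_le by (auto simp: tine_def)
    moreover have "\<forall>i. honest w i \<longrightarrow> i \<le> length w \<longrightarrow> depth F (vh i) \<le> length t - 1"
      using max_tine_depth[OF t] vh by blast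
    ultimately show ?thesis using cat_in[OF cat h(1) _ _ tt] h by simp
  qed
  have tp: "tine F p" and tq: "tine F q" using pq by (auto simp: max_tine_def)
  obtain ip where ip: "ip < length p" "p ! ip = vh h" using vin[OF pq(1)] by (metis in_set_conv_nth)
  obtain iq where iq: "iq < length q" "q ! iq = vh h" using vin[OF pq(2)] by (metis in_set_conv_nth)
  have "ip = iq" using tine_depth[OF tp ip(1)] tine_depth[OF tq iq(1)] ip iq by simp
  have common: "\<exists>a<length q. u = q ! a" if u: "u \<in> set p" "lab F u = s" for u
  proof -
    obtain a where a: "a < length p" "u = p ! a" using u(1) by (metis in_set_conv_nth)
    have "a < ip"
    proof (rule ccontr)
      assume "\<not> a < ip"
      then have "ip \<le> a" by simp
      then have "lab F (p ! ip) \<le> lab F (p ! a)"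
        using tine_lab_mono[OF tp _ a(1)] by (cases "ip = a") (auto intro: less_imp_le)
      then show False using ip(2) vh[OF hh] u(2) a(2) h(2) by simp
    qed
    then have "p ! a = q ! a" using tine_prefix_eq[OF tp tq ip(1)] iq \<open>ip = iq\<close> ip by simp
    moreover have "a < length q" using \<open>a < ip\<close> \<open>ip = iq\<close> iq(1) by simp
    ultimately show ?thesis using a by auto
  qed
  show False
    using pq(3)
  proof
    assume "\<exists>u\<in>set p. \<exists>v\<in>set q. lab F u = s \<and> lab F v = s \<and> u \<noteq> v"
    then obtain u v where uv: "u \<in> set p" "v \<in> set q" "lab F u = s" "lab F v = s" "u \<noteq> v" by blast
    obtain a where a: "a < length q" "u = q ! a" using common uv by blast
    obtain b where b: "b < length q" "v = q ! b" using uv(2) by (metis in_set_conv_nth)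
    have "a = b" using tine_lab_inj[OF tq a(1) b(1)] a b uv by simp
    then show False using a b uv by simp
  next
    assume "(\<exists>u\<in>set p. lab F u = s) \<and> \<not> (\<exists>v\<in>set q. lab F v = s)"
    then show False using common by (metis nth_mem)
  qed
qed

end


definition cp :: "nat list \<Rightarrow> (nat \<times> nat) set" where
  "cp L = {(L ! i, L ! Suc i) | i. Suc i < length L}"

lemma cp_snoc: "L \<noteq> [] \<Longrightarrow> cp (L @ [x]) = insert (last L, x) (cp L)"
proof -
  assume L: "L \<noteq> []"
  show ?thesis
  proof (intro set_eqI iffI)
    fix e assume "e \<in> cp (L @ [x])"
    then obtain i where i: "e = ((L @ [x]) ! i, (L @ [x]) ! Suc i)" "Suc i < Suc (length L)" by (auto simp: cp_def)
    show "e \<in> insert (last L, x) (cp L)"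
    proof (cases "Suc i < length L")
      case True then show ?thesis using i by (auto simp: cp_def nth_append)
    next
      case False
      then have "i = length L - 1" using i by simp
      then show ?thesis using i L by (simp add: nth_append last_conv_nth)
    qed
  next
    fix e assume "e \<in> insert (last L, x) (cp L)"
    then show "e \<in> cp (L @ [x])"
    proof
      assume "e = (last L, x)"
      then have "e = ((L @ [x]) ! (length L - 1), (L @ [x]) ! Suc (length L - 1))"
        using L by (simp add: nth_append last_conv_nth)
      then show ?thesis using L unfolding cp_def by (intro CollectI exI[of _ "length L - 1"]) simp
    next
      assume "e \<in> cp L"
      then obtain i where i: "e = (L ! i, L ! Suc i)" "Suc i < length L" by (auto simp: cp_def)
      then have "e = ((L @ [x]) ! i, (L @ [x]) ! Suc i)" by (simp add: nth_append)
      then show ?thesis using i unfolding cp_def by (intro CollectI exI[of _ i]) simp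
    qed
  qed
qed

fun hp :: "bool list \<Rightarrow> nat \<Rightarrow> nat list" where
  "hp w 0 = [0]"
| "hp w (Suc t) = (if honest w (Suc t) then hp w t @ [Suc t] else hp w t)"

definition HF :: "bool list \<Rightarrow> nat \<Rightarrow> fork" where
  "HF w t = \<lparr>verts = set (hp w t), edges = cp (hp w t), root = 0, lab = id\<rparr>"

lemma hp_ne: "hp w t \<noteq> []" by (induction t) auto

lemma hp_0: "hp w t ! 0 = 0"
  by (induction t) (auto simp: nth_append hp_ne)

lemma hp_le: "x \<in> set (hp w t) \<Longrightarrow> x \<le> t"
  by (induction t) (auto split: if_splits)

lemma hp_sorted: "sorted_wrt (<) (hp w t)"
proof (induction t)
  case 0 then show ?case by simp
next
  case (Suc t)
  have "\<forall>x\<in>set (hp w t). x < Suc t" using hp_le by (simp add: le_imp_less_Suc)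
  then show ?case using Suc by (simp add: sorted_wrt_append)
qed

lemma hp_set: "set (hp w t) = {0} \<union> {i. honest w i \<and> i \<le> t}"
proof (induction t)
  case 0 then show ?case by (auto simp: honest_def)
next
  case (Suc t)
  have "{i. honest w i \<and> i \<le> Suc t} = {i. honest w i \<and> i \<le> t} \<union> (if honest w (Suc t) then {Suc t} else {})"
    by (auto simp: le_Suc_eq)
  then show ?case using Suc by auto
qed

lemma hp_distinct: "distinct (hp w t)"
  using hp_sorted strict_sorted_iff by blast

lemma hp_nth_mono: "i < j \<Longrightarrow> j < length (hp w t) \<Longrightarrow> hp w t ! i < hp w t ! j"
  using hp_sorted sorted_wrt_nth_less by blast

lemma hp_nth_inj: "i < length (hp w t) \<Longrightarrow> j < length (hp w t) \<Longrightarrow> hp w t ! i = hp w t ! j \<Longrightarrow> i = j"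
  using hp_distinct nth_eq_iff_index_eq by blast

lemma HF_relpow: "(0, v) \<in> cp (hp w t) ^^ m \<Longrightarrow> m < length (hp w t) \<and> v = hp w t ! m"
proof (induction m arbitrary: v)
  case 0 then show ?case using hp_0 hp_ne by (simp add: hp_0)
next
  case (Suc m)
  obtain x where x: "(0, x) \<in> cp (hp w t) ^^ m" "(x, v) \<in> cp (hp w t)" using Suc.prems relpow_Suc_E by metis
  obtain i where i: "x = hp w t ! i" "v = hp w t ! Suc i" "Suc i < length (hp w t)" using x(2) by (auto simp: cp_def)
  have im: "m < length (hp w t)" "x = hp w t ! m" using Suc.IH[OF x(1)] by auto
  have "i = m" using hp_nth_inj[of i w t m] i im by simp
  then show ?case using i by simp
qed

lemma HF_relpow_ex: "j < length (hp w t) \<Longrightarrow> (0, hp w t ! j) \<in> cp (hp w t) ^^ j"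
proof (induction j)
  case 0 then show ?case by (simp add: hp_0)
next
  case (Suc j)
  then have "(hp w t ! j, hp w t ! Suc j) \<in> cp (hp w t)" by (auto simp: cp_def)
  with Suc show ?case by auto
qed

lemma HF_depth: "j < length (hp w t) \<Longrightarrow> depth (HF w t) (hp w t ! j) = j"
  unfolding depth_def HF_def
  by (rule Least_equality) (auto intro: HF_relpow_ex dest: HF_relpow hp_nth_inj)

lemma honest_take: "honest (take t w) i \<longleftrightarrow> honest w i \<and> i \<le> t"
  by (auto simp: honest_def)

lemma cp_lt: "(u, v) \<in> cp (hp w t) \<Longrightarrow> u < v"
  by (auto simp: cp_def intro: hp_nth_mono)

lemma cp_trancl_lt: "(u, v) \<in> (cp (hp w t))\<^sup>+ \<Longrightarrow> u < v"
  by (induction rule: trancl_induct) (auto dest: cp_lt)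

lemma HF_fork: "t \<le> length w \<Longrightarrow> is_fork (take t w) (HF w t)"
proof -
  assume t: "t \<le> length w"
  let ?L = "hp w t"
  have noroot: "(u, 0) \<notin> cp ?L" for u using cp_lt[of u 0 w t] by auto
  have par: "\<exists>!u. (u, v) \<in> cp ?L" if v: "v \<in> set ?L" "v \<noteq> 0" for v
  proof -
    obtain j where j: "j < length ?L" "v = ?L ! j" using v(1) by (metis in_set_conv_nth)
    have j0: "j \<noteq> 0" using j v(2) hp_0[of w t] by (cases j) auto
    show ?thesis
    proof (rule ex1I[of _ "?L ! (j - 1)"])
      show "(?L ! (j - 1), v) \<in> cp ?L" using j j0 unfolding cp_def by (intro CollectI exI[of _ "j - 1"]) simp
      fix u assume "(u, v) \<in> cp ?L"
      then obtain i where i: "u = ?L ! i" "v = ?L ! Suc i" "Suc i < length ?L" by (auto simp: cp_def)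
      have "?L ! Suc i = ?L ! j" using i(2) j(2) by simp
      then have "Suc i = j" using hp_nth_inj[of "Suc i" w t j] j(1) i(3) by blast
      then have "i = j - 1" by simp
      then show "u = ?L ! (j - 1)" using i(1) by simp
    qed
  qed
  have reach: "(0, v) \<in> (cp ?L)\<^sup>*" if vL: "v \<in> set ?L" for v
  proof -
    obtain j where j: "j < length ?L" "v = ?L ! j" using vL by (auto simp: in_set_conv_nth)
    have "(0, v) \<in> cp ?L ^^ j" using HF_relpow_ex[OF j(1)] j(2) by simp
    then show ?thesis by (rule relpow_imp_rtrancl)
  qed
  have sub: "cp ?L \<subseteq> set ?L \<times> set ?L"
  proof
    fix e assume "e \<in> cp ?L"
    then obtain i where "e = (?L ! i, ?L ! Suc i)" "Suc i < length ?L" unfolding cp_def by blast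
    then show "e \<in> set ?L \<times> set ?L" by simp
  qed
  show ?thesis unfolding is_fork_def HF_def
  proof (simp only: fork.simps, intro conjI allI impI ballI)
    show "finite (set ?L)" by simp
    show "0 \<in> set ?L" using hp_set by auto
    show "cp ?L \<subseteq> set ?L \<times> set ?L" by (rule sub)
    show "\<And>u. (u, 0) \<notin> cp ?L" by (rule noroot)
    show "\<And>v. v \<in> set ?L \<Longrightarrow> v \<noteq> 0 \<Longrightarrow> \<exists>!u. (u, v) \<in> cp ?L" by (rule par)
    show "\<And>v. v \<in> set ?L \<Longrightarrow> (0, v) \<in> (cp ?L)\<^sup>*" by (rule reach)
    show "\<And>v. v \<in> set ?L \<Longrightarrow> id v \<le> length (take t w)" using hp_le t by simp
    show "id 0 = 0" by simp
    show "\<And>u v. (u, v) \<in> (cp ?L)\<^sup>+ \<Longrightarrow> id u < id v" using cp_trancl_lt by simp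
    fix i assume "honest (take t w) i"
    then have "{v \<in> set ?L. id v = i} = {i}" using hp_set honest_take by auto
    then show "card {v \<in> set ?L. id v = i} = 1" by simp
  next
    fix i j u v
    assume a: "honest (take t w) i \<and> honest (take t w) j \<and> i < j \<and> u \<in> set ?L \<and> v \<in> set ?L \<and> id u = i \<and> id v = j"
    obtain a where a1: "a < length ?L" "u = ?L ! a" using a by (metis in_set_conv_nth)
    obtain b where b1: "b < length ?L" "v = ?L ! b" using a by (metis in_set_conv_nth)
    have "a < b"
    proof (rule ccontr)
      assume "\<not> a < b"
      then have "b < a \<or> b = a" by auto
      then have "?L ! b \<le> ?L ! a" using hp_nth_mono[of b a w t] a1(1) by auto
      then show False using a a1 b1 by simp
    qed
    then show "depth \<lparr>verts = set ?L, edges = cp ?L, root = 0, lab = id\<rparr> u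
             < depth \<lparr>verts = set ?L, edges = cp ?L, root = 0, lab = id\<rparr> v"
      using HF_depth[OF a1(1)] HF_depth[OF b1(1)] a1 b1 by (simp add: HF_def)
  qed
qed


lemma HF_tine: "tine (HF w t) (hp w t)"
  unfolding tine_def HF_def using hp_ne[of w t] hp_0[of w t]
  by (auto simp: hd_conv_nth cp_def)

lemma HF_max: "t \<le> length w \<Longrightarrow> max_tine (HF w t) (hp w t)"
proof -
  assume t: "t \<le> length w"
  interpret fk "take t w" "HF w t" using HF_fork[OF t] by unfold_locales
  show ?thesis unfolding max_tine_def
  proof (intro conjI allI impI HF_tine)
    fix q assume q: "tine (HF w t) q"
    then have "q \<noteq> []" by (simp add: tine_def)
    then have "(root (HF w t), q ! (length q - 1)) \<in> edges (HF w t) ^^ (length q - 1)"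
      using tine_relpow[OF q] by simp
    then have "length q - 1 < length (hp w t)" using HF_relpow by (simp add: HF_def)
    then show "length q - 1 \<le> length (hp w t) - 1" by simp
  qed
qed

lemma honest_play: "valid_play w (HF w, HF w)"
  unfolding valid_play_def Let_def fst_conv snd_conv
proof (intro conjI ballI)
  show "is_fork [] (HF w 0)" using HF_fork[of 0 w] by simp
  show "verts (HF w 0) = {root (HF w 0)}" by (simp add: HF_def)
  fix t assume t: "t \<in> {1..length w}"
  then obtain t' where t': "t = Suc t'" "Suc t' \<le> length w" by (cases t) auto
  show "is_fork (take t w) (HF w t)" using HF_fork t by simp
  show "subfork (HF w t) (HF w t)" by (simp add: subfork_def)
  show "w ! (t - 1) \<longrightarrow> is_fork (take t w) (HF w t) \<and> subfork (HF w (t - 1)) (HF w t)"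
  proof
    assume a: "w ! (t - 1)"
    then have "\<not> honest w (Suc t')" using t' by (simp add: honest_def)
    then have "HF w t = HF w (t - 1)" using t' by (simp add: HF_def)
    moreover have "is_fork (take t w) (HF w t)" using HF_fork t by simp
    ultimately show "is_fork (take t w) (HF w t) \<and> subfork (HF w (t - 1)) (HF w t)"
      by (simp add: subfork_def)
  qed
  show "\<not> w ! (t - 1) \<longrightarrow> (\<exists>p v. max_tine (HF w (t - 1)) p \<and> v \<notin> verts (HF w (t - 1)) \<and>
        verts (HF w t) = insert v (verts (HF w (t - 1))) \<and>
        edges (HF w t) = insert (last p, v) (edges (HF w (t - 1))) \<and>
        root (HF w t) = root (HF w (t - 1)) \<and>
        (\<forall>x\<in>verts (HF w (t - 1)). lab (HF w t) x = lab (HF w (t - 1)) x) \<and> lab (HF w t) v = t)"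
  proof
    assume a: "\<not> w ! (t - 1)"
    then have h: "honest w (Suc t')" using t' by (simp add: honest_def)
    have nv: "Suc t' \<notin> set (hp w t')" using hp_le by fastforce
    show "\<exists>p v. max_tine (HF w (t - 1)) p \<and> v \<notin> verts (HF w (t - 1)) \<and>
        verts (HF w t) = insert v (verts (HF w (t - 1))) \<and>
        edges (HF w t) = insert (last p, v) (edges (HF w (t - 1))) \<and>
        root (HF w t) = root (HF w (t - 1)) \<and>
        (\<forall>x\<in>verts (HF w (t - 1)). lab (HF w t) x = lab (HF w (t - 1)) x) \<and> lab (HF w t) v = t"
      using HF_max[of t' w] t' h nv cp_snoc[OF hp_ne[of w t'], of "Suc t'"]
      by (intro exI[of _ "hp w t'"] exI[of _ "Suc t'"]) (simp add: HF_def)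
  qed
qed


definition wle :: "bool list \<Rightarrow> bool list \<Rightarrow> bool" where
  "wle x y \<longleftrightarrow> length x = length y \<and> (\<forall>i<length x. x ! i \<longrightarrow> y ! i)"

lemma wle_honest: "wle x y \<Longrightarrow> honest y i \<Longrightarrow> honest x i"
proof -
  assume a: "wle x y" "honest y i"
  then have "i - 1 < length x" by (auto simp: wle_def honest_def)
  then show "honest x i" using a by (auto simp: wle_def honest_def)
qed

lemma wle_take: "wle x y \<Longrightarrow> wle (take t x) (take t y)"
  unfolding wle_def by auto

lemma fork_mono: "is_fork x F \<Longrightarrow> wle x y \<Longrightarrow> is_fork y F"
proof -
  assume f: "is_fork x F" and xy: "wle x y"
  have l: "length x = length y" using xy by (simp add: wle_def)
  have h: "honest y i \<Longrightarrow> honest x i" for i using wle_honest[OF xy] .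
  show "is_fork y F" using f unfolding is_fork_def
    apply (elim conjE)
    apply (intro conjI)
    apply (assumption | simp add: l | blast dest: h)+
    done
qed

lemma subfork_trans: "subfork A B \<Longrightarrow> subfork B C \<Longrightarrow> subfork A C"
  unfolding subfork_def by auto

lemma win_mono:
  assumes vp: "valid_play w P" and wn: "wins s k w P" and le: "wle w w'"
  shows "\<exists>P'. valid_play w' P' \<and> wins s k w' P'"
proof -
  obtain Fs As where P: "P = (Fs, As)" by (cases P)
  define Fs' where "Fs' = (\<lambda>t. if \<not> w ! (t - 1) \<and> w' ! (t - 1) then As t else Fs t)"
  have len: "length w' = length w" using le by (simp add: wle_def)
  have V: "is_fork [] (As 0)" "verts (As 0) = {root (As 0)}"
    and V2: "\<And>t. t \<in> {1..length w} \<Longrightarrow>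
        (\<not> w ! (t - 1) \<longrightarrow>
           (\<exists>p v. max_tine (As (t - 1)) p \<and> v \<notin> verts (As (t - 1)) \<and>
              verts (Fs t) = insert v (verts (As (t - 1))) \<and>
              edges (Fs t) = insert (last p, v) (edges (As (t - 1))) \<and>
              root (Fs t) = root (As (t - 1)) \<and>
              (\<forall>x\<in>verts (As (t - 1)). lab (Fs t) x = lab (As (t - 1)) x) \<and>
              lab (Fs t) v = t)) \<and>
        (w ! (t - 1) \<longrightarrow> is_fork (take t w) (Fs t) \<and> subfork (As (t - 1)) (Fs t)) \<and>
        is_fork (take t w) (As t) \<and> subfork (Fs t) (As t)"
    using vp unfolding valid_play_def P Let_def fst_conv snd_conv by blast+
  have "valid_play w' (Fs', As)"
    unfolding valid_play_def Let_def fst_conv snd_conv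
  proof (intro conjI ballI V)
    fix t assume t: "t \<in> {1..length w'}"
    then have t': "t \<in> {1..length w}" using len by simp
    have lt: "t - 1 < length w" using t' by auto
    note v2 = V2[OF t']
    have lt': "wle (take t w) (take t w')" using wle_take[OF le] .
    show "is_fork (take t w') (As t)" using v2 fork_mono lt' by blast
    show "subfork (Fs' t) (As t)" using v2 by (auto simp: Fs'_def subfork_def)
    show "\<not> w' ! (t - 1) \<longrightarrow>
       (\<exists>p v. max_tine (As (t - 1)) p \<and> v \<notin> verts (As (t - 1)) \<and>
              verts (Fs' t) = insert v (verts (As (t - 1))) \<and>
              edges (Fs' t) = insert (last p, v) (edges (As (t - 1))) \<and>
              root (Fs' t) = root (As (t - 1)) \<and>
              (\<forall>x\<in>verts (As (t - 1)). lab (Fs' t) x = lab (As (t - 1)) x) \<and>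
              lab (Fs' t) v = t)"
    proof
      assume nw: "\<not> w' ! (t - 1)"
      then have "\<not> w ! (t - 1)" using le lt by (auto simp: wle_def)
      then show "\<exists>p v. max_tine (As (t - 1)) p \<and> v \<notin> verts (As (t - 1)) \<and>
              verts (Fs' t) = insert v (verts (As (t - 1))) \<and>
              edges (Fs' t) = insert (last p, v) (edges (As (t - 1))) \<and>
              root (Fs' t) = root (As (t - 1)) \<and>
              (\<forall>x\<in>verts (As (t - 1)). lab (Fs' t) x = lab (As (t - 1)) x) \<and>
              lab (Fs' t) v = t"
        using v2 nw by (simp add: Fs'_def)
    qed
    show "w' ! (t - 1) \<longrightarrow> is_fork (take t w') (Fs' t) \<and> subfork (As (t - 1)) (Fs' t)"
    proof
      assume yw: "w' ! (t - 1)"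
      show "is_fork (take t w') (Fs' t) \<and> subfork (As (t - 1)) (Fs' t)"
      proof (cases "w ! (t - 1)")
        case True
        then have "is_fork (take t w) (Fs t)" "subfork (As (t - 1)) (Fs t)" using v2 by auto
        then show ?thesis using yw True fork_mono[OF _ lt'] by (simp add: Fs'_def)
      next
        case False
        then obtain p v where pv: "verts (Fs t) = insert v (verts (As (t - 1)))"
              "edges (Fs t) = insert (last p, v) (edges (As (t - 1)))"
              "(\<forall>x\<in>verts (As (t - 1)). lab (Fs t) x = lab (As (t - 1)) x)"
          using v2 by blast
        have "subfork (As (t - 1)) (Fs t)" using pv unfolding subfork_def by auto
        then have "subfork (As (t - 1)) (As t)" using v2 subfork_trans by blast
        moreover have "is_fork (take t w) (As t)" using v2 by blast
        ultimately show ?thesis using yw False fork_mono[OF _ lt'] by (simp add: Fs'_def)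
      qed
    qed
  qed
  moreover have "wins s k w' (Fs', As)" using wn len unfolding wins_def P by simp
  ultimately show ?thesis by blast
qed

lemma catalan_take: "catalan w h \<Longrightarrow> h \<le> t \<Longrightarrow> t \<le> length w \<Longrightarrow> catalan (take t w) h"
proof -
  assume c: "catalan w h" "h \<le> t" "t \<le> length w"
  have "sm (take t w) a b = sm w a b" if "1 \<le> a" "b \<le> t" for a b
    unfolding sm_def using that c by (intro sum.cong) (auto simp: xv_def)
  then show ?thesis using c unfolding catalan_def by (simp add: min_def)
qed

lemma wins_go:
  assumes vp: "valid_play w P" and wn: "wins s k w P"
  shows "go s k 0 0 0 w = 0"
proof (rule ccontr)
  assume "go s k 0 0 0 w \<noteq> 0"
  then obtain h where h: "Suc s \<le> h" "h \<le> s + k" "catalan w h" using go_catalan by blast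
  obtain t where t: "s + k \<le> t" "t \<le> length w" "not_settled (snd P t) s" using wn by (auto simp: wins_def)
  have t1: "t \<in> {1..length w}" using t h by auto
  have f: "is_fork (take t w) (snd P t)" using vp t1 unfolding valid_play_def Let_def by blast
  interpret fk "take t w" "snd P t" using f by unfold_locales
  have "\<not> not_settled (snd P t) s"
    using settled[OF catalan_take[OF h(3)]] h t by simp
  then show False using t by simp
qed


lemma finite_len: "finite {w::bool list. length w = n}"
proof -
  have "{w::bool list. length w = n} = {xs. set xs \<subseteq> UNIV \<and> length xs = n}" by auto
  then show ?thesis using finite_lists_length_eq[of "UNIV :: bool set" n] by simp
qed

lemma pmf_bern: "0 \<le> q \<Longrightarrow> q \<le> 1 \<Longrightarrow> pmf (bern_list q n) w = (if length w = n then wt q w else 0)"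
proof (induction n arbitrary: w)
  case 0 then show ?case by (auto simp: wt_def indicator_def)
next
  case (Suc n)
  let ?f = "\<lambda>(b::bool, bs::bool list). b # bs"
  have inj: "inj ?f" by (auto simp: inj_def)
  show ?case
  proof (cases w)
    case Nil
    have "w \<notin> set_pmf (bern_list q (Suc n))" using Nil by auto
    then show ?thesis using Nil by (simp add: pmf_eq_0_set_pmf)
  next
    case (Cons b bs)
    have "pmf (bern_list q (Suc n)) w = pmf (pair_pmf (bernoulli_pmf q) (bern_list q n)) (b, bs)"
      using pmf_map_inj'[OF inj, of "pair_pmf (bernoulli_pmf q) (bern_list q n)" "(b, bs)"] Cons by simp
    also have "\<dots> = pmf (bernoulli_pmf q) b * pmf (bern_list q n) bs" by (rule pmf_pair)
    finally show ?thesis using Suc Cons by (cases b) (auto simp: wt_def)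
  qed
qed

lemma set_bern: "0 \<le> q \<Longrightarrow> q \<le> 1 \<Longrightarrow> set_pmf (bern_list q n) \<subseteq> {w. length w = n}"
proof
  fix w assume q: "0 \<le> q" "q \<le> 1" and "w \<in> set_pmf (bern_list q n)"
  then have "pmf (bern_list q n) w \<noteq> 0" by (simp add: set_pmf_iff)
  then show "w \<in> {w. length w = n}" using pmf_bern[OF q, of n w] by (auto split: if_splits)
qed

lemma prob_support:
  assumes "set_pmf M \<subseteq> L" "A \<inter> L = B \<inter> L"
  shows "measure_pmf.prob M A = measure_pmf.prob M B"
proof -
  have "A \<inter> set_pmf M = B \<inter> set_pmf M" using assms by blast
  then show ?thesis by (metis measure_Int_set_pmf)
qed

lemma prob_sum:
  assumes "set_pmf M \<subseteq> {w::bool list. length w = n}"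
  shows "measure_pmf.prob M A = (\<Sum>w\<in>{w. length w = n}. pmf M w * indicator A w)"
proof -
  have "measure_pmf.prob M A = measure_pmf.prob M (A \<inter> {w. length w = n})"
    by (rule prob_support[OF assms]) blast
  also have "\<dots> = sum (pmf M) (A \<inter> {w. length w = n})"
  proof (rule measure_measure_pmf_finite)
    have "finite {w::bool list. length w = n}" by (rule finite_len)
    then show "finite (A \<inter> {w. length w = n})" by simp
  qed
  also have "\<dots> = (\<Sum>w\<in>{w. length w = n}. pmf M w * indicator A w)"
  proof -
    have "sum (pmf M) ({w. length w = n} \<inter> A) = (\<Sum>w\<in>{w. length w = n}. if w \<in> A then pmf M w else 0)"
      by (rule sum.inter_restrict[OF finite_len])
    moreover have "(\<Sum>w\<in>{w. length w = n}. if w \<in> A then pmf M w else 0) = (\<Sum>w\<in>{w. length w = n}. pmf M w * indicator A w)"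
      by (intro sum.cong) (auto simp: indicator_def)
    ultimately show ?thesis by (simp add: Int_commute)
  qed
  finally show ?thesis .
qed

lemma prob_bern_Ex: "0 \<le> q \<Longrightarrow> q \<le> 1 \<Longrightarrow> measure_pmf.prob (bern_list q n) A = Ex q n (indicator A)"
  using prob_sum[OF set_bern, of q n A] pmf_bern[of q n] by (simp add: Ex_def)

definition Win :: "nat \<Rightarrow> nat \<Rightarrow> nat \<Rightarrow> bool list set" where
  "Win T s k = {w. length w = T \<and> (\<exists>P. valid_play w P \<and> wins s k w P)}"

lemma insec_eq:
  assumes supp: "set_pmf D \<subseteq> {w. length w = T}"
  shows "settle_insec D T s k = measure_pmf.prob D (Win T s k)"
proof -
  define Adv where "Adv = {adv :: bool list \<Rightarrow> play. \<forall>w. length w = T \<longrightarrow> valid_play w (adv w)}"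
  define f where "f = (\<lambda>adv. measure_pmf.prob D {w. wins s k w (adv w)})"
  have le: "f adv \<le> measure_pmf.prob D (Win T s k)" if "adv \<in> Adv" for adv
  proof -
    have "f adv = measure_pmf.prob D ({w. wins s k w (adv w)} \<inter> set_pmf D)"
      by (simp add: f_def measure_Int_set_pmf)
    also have "\<dots> \<le> measure_pmf.prob D (Win T s k)"
    proof (intro measure_pmf.finite_measure_mono subsetI)
      fix x assume x: "x \<in> {w. wins s k w (adv w)} \<inter> set_pmf D"
      then have "length x = T" using supp by auto
      then have "valid_play x (adv x)" using that by (simp add: Adv_def)
      then show "x \<in> Win T s k" using x \<open>length x = T\<close> unfolding Win_def by blast
    qed simp
    finally show ?thesis .
  qed
  define opt where "opt = (\<lambda>w. if \<exists>P. valid_play w P \<and> wins s k w P then SOME P. valid_play w P \<and> wins s k w P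
     else (HF w, HF w))"
  have optv: "valid_play w (opt w)" for w
  proof (cases "\<exists>P. valid_play w P \<and> wins s k w P")
    case True then show ?thesis unfolding opt_def using someI_ex[OF True] by simp
  next
    case False
    then have "opt w = (HF w, HF w)" unfolding opt_def by metis
    then show ?thesis using honest_play by simp
  qed
  have optA: "opt \<in> Adv" using optv by (simp add: Adv_def)
  have "measure_pmf.prob D (Win T s k) \<le> f opt"
  proof -
    have "Win T s k \<subseteq> {w. wins s k w (opt w)}"
    proof
      fix w assume "w \<in> Win T s k"
      then have ex: "\<exists>P. valid_play w P \<and> wins s k w P" by (simp add: Win_def)
      then show "w \<in> {w. wins s k w (opt w)}" unfolding opt_def using someI_ex[OF ex] by simp
    qed
    then show ?thesis unfolding f_def by (intro measure_pmf.finite_measure_mono) auto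
  qed
  then have eq: "f opt = measure_pmf.prob D (Win T s k)" using le[OF optA] by simp
  have "settle_insec D T s k = Sup (f ` Adv)" unfolding settle_insec_def Adv_def f_def by simp
  also have "\<dots> = f opt"
  proof (rule cSup_eq_maximum)
    show "f opt \<in> f ` Adv" using optA by (rule imageI)
    fix x assume "x \<in> f ` Adv"
    then obtain a where "a \<in> Adv" "x = f a" by blast
    then show "x \<le> f opt" using le eq by simp
  qed
  finally show ?thesis using eq by simp
qed


locale dom =
  fixes W :: "bool list pmf" and T :: nat and q :: real and U :: "bool list set"
  assumes supp: "set_pmf W \<subseteq> {w. length w = T}"
    and q: "0 \<le> q" "q \<le> 1"
    and mart: "\<And>x. length x < T \<Longrightarrow>
        measure_pmf.prob W {w. take (length x) w = x \<and> w ! length x} \<le> q * measure_pmf.prob W {w. take (length x) w = x}"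
    and up: "\<And>x y. x \<in> U \<Longrightarrow> wle x y \<Longrightarrow> y \<in> U"
begin

definition Wp :: "bool list \<Rightarrow> real" where "Wp x = measure_pmf.prob W {w. take (length x) w = x}"
definition g :: "bool list \<Rightarrow> real" where "g x = Ex q (T - length x) (\<lambda>bs. indicator U (x @ bs))"
definition Q :: "nat \<Rightarrow> real" where "Q n = (\<Sum>x\<in>{x. length x = n}. Wp x * g x)"

lemma g_split: "length x < T \<Longrightarrow> g x = q * g (x @ [True]) + (1 - q) * g (x @ [False])"
proof -
  assume l: "length x < T"
  then have e: "T - length x = Suc (T - length (x @ [True]))" "T - length (x @ [False]) = T - length (x @ [True])" by auto
  show ?thesis unfolding g_def e(2) unfolding e(1) Ex_Suc by simp
qed

lemma wle_flip: "wle (x @ False # bs) (x @ True # bs)"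
  unfolding wle_def by (auto simp: nth_append nth_Cons split: nat.splits)

lemma g_mono: "g (x @ [False]) \<le> g (x @ [True])"
proof -
  have l: "length (x @ [False]) = length (x @ [True])" by simp
  show ?thesis unfolding g_def l
  proof (rule Ex_mono[OF q])
    fix bs :: "bool list"
    have "x @ False # bs \<in> U \<Longrightarrow> x @ True # bs \<in> U" using up[OF _ wle_flip] by blast
    then show "indicator U ((x @ [False]) @ bs) \<le> (indicator U ((x @ [True]) @ bs) :: real)"
      by (simp add: indicator_def)
  qed
qed

lemma Wp_nonneg: "0 \<le> Wp x" by (simp add: Wp_def)

lemma take_Suc_eq: "length w = T \<Longrightarrow> length x < T \<Longrightarrow>
    (take (Suc (length x)) w = x @ [b]) \<longleftrightarrow> (take (length x) w = x \<and> w ! length x = b)"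
  by (simp add: take_Suc_conv_app_nth)

lemma Wp_split: "length x < T \<Longrightarrow> Wp x = Wp (x @ [True]) + Wp (x @ [False])"
proof -
  assume l: "length x < T"
  have "Wp x = measure_pmf.prob W ({w. take (Suc (length x)) w = x @ [True]} \<union> {w. take (Suc (length x)) w = x @ [False]})"
    unfolding Wp_def using l
    by (intro prob_support[OF supp]) (auto simp: take_Suc_eq)
  also have "\<dots> = Wp (x @ [True]) + Wp (x @ [False])"
    unfolding Wp_def by (subst measure_pmf.finite_measure_Union) auto
  finally show ?thesis .
qed

lemma Wp_mart: "length x < T \<Longrightarrow> Wp (x @ [True]) \<le> q * Wp x"
proof -
  assume l: "length x < T"
  have "Wp (x @ [True]) = measure_pmf.prob W {w. take (length x) w = x \<and> w ! length x}"
    unfolding Wp_def using l by (intro prob_support[OF supp]) (auto simp: take_Suc_eq)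
  then show ?thesis using mart[OF l] by (simp add: Wp_def)
qed

lemma lists_snoc_eq: "{y::bool list. length y = Suc n} = (\<lambda>(x, b). x @ [b]) ` ({x. length x = n} \<times> UNIV)"
proof (intro set_eqI iffI)
  fix y :: "bool list" assume "y \<in> {y. length y = Suc n}"
  then have "y = butlast y @ [last y]" "length (butlast y) = n"
    by (auto intro: append_butlast_last_id[symmetric])
  then show "y \<in> (\<lambda>(x, b). x @ [b]) ` ({x. length x = n} \<times> UNIV)"
    by (intro image_eqI[of _ _ "(butlast y, last y)"]) auto
qed auto

lemma Q_step: "n < T \<Longrightarrow> Q (Suc n) \<le> Q n"
proof -
  assume n: "n < T"
  have inj: "inj_on (\<lambda>(x, b::bool). x @ [b]) ({x::bool list. length x = n} \<times> UNIV)"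
    by (auto simp: inj_on_def)
  have "Q (Suc n) = (\<Sum>(x, b)\<in>{x::bool list. length x = n} \<times> UNIV. Wp (x @ [b]) * g (x @ [b]))"
    unfolding Q_def lists_snoc_eq by (subst sum.reindex[OF inj]) (simp add: case_prod_unfold)
  also have "\<dots> = (\<Sum>x\<in>{x::bool list. length x = n}. \<Sum>b\<in>UNIV. Wp (x @ [b]) * g (x @ [b]))"
    by (rule sum.cartesian_product[symmetric])
  also have "\<dots> = (\<Sum>x\<in>{x::bool list. length x = n}. Wp (x @ [True]) * g (x @ [True]) + Wp (x @ [False]) * g (x @ [False]))"
    by (simp add: UNIV_bool add.commute)
  also have "\<dots> \<le> (\<Sum>x\<in>{x::bool list. length x = n}. Wp x * g x)"
  proof (rule sum_mono)
    fix x :: "bool list" assume "x \<in> {x. length x = n}"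
    then have l: "length x < T" using n by simp
    define a where "a = Wp (x @ [True])"
    define b where "b = Wp (x @ [False])"
    define gt where "gt = g (x @ [True])"
    define gf where "gf = g (x @ [False])"
    have sp: "Wp x = a + b" using Wp_split[OF l] by (simp add: a_def b_def)
    have ma: "a \<le> q * (a + b)" using Wp_mart[OF l] sp by (simp add: a_def)
    have gm: "gf \<le> gt" using g_mono by (simp add: gf_def gt_def)
    have gx: "g x = q * gt + (1 - q) * gf" using g_split[OF l] by (simp add: gt_def gf_def)
    have "a * gt + b * gf = (a + b) * gf + a * (gt - gf)" by (simp add: algebra_simps)
    also have "\<dots> \<le> (a + b) * gf + q * (a + b) * (gt - gf)"
      using ma gm by (intro add_left_mono mult_right_mono) auto
    also have "\<dots> = (a + b) * (q * gt + (1 - q) * gf)" by (simp add: algebra_simps)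
    finally show "Wp (x @ [True]) * g (x @ [True]) + Wp (x @ [False]) * g (x @ [False]) \<le> Wp x * g x"
      using sp gx by (simp add: a_def b_def gt_def gf_def)
  qed
  finally show ?thesis unfolding Q_def .
qed

lemma Q_mono: "n \<le> T \<Longrightarrow> Q n \<le> Q 0"
proof (induction n)
  case 0 then show ?case by simp
next
  case (Suc n)
  then show ?case using Q_step[of n] by simp
qed

lemma Q_0: "Q 0 = Ex q T (indicator U)"
proof -
  have "{x::bool list. length x = 0} = {[]}" by auto
  moreover have "Wp [] = 1" by (simp add: Wp_def)
  ultimately show ?thesis by (simp add: Q_def g_def)
qed

lemma Q_T: "Q T = measure_pmf.prob W U"
proof -
  have "Q T = (\<Sum>x\<in>{x. length x = T}. pmf W x * indicator U x)"
    unfolding Q_def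
  proof (intro sum.cong refl)
    fix x :: "bool list" assume x: "x \<in> {x. length x = T}"
    have "Wp x = measure_pmf.prob W {x}"
      unfolding Wp_def using x by (intro prob_support[OF supp]) auto
    moreover have "g x = indicator U x" using x by (simp add: g_def Ex_0)
    ultimately show "Wp x * g x = pmf W x * indicator U x" by (simp add: measure_pmf_single)
  qed
  also have "\<dots> = measure_pmf.prob W U" using prob_sum[OF supp] by simp
  finally show ?thesis .
qed

lemma dominate: "measure_pmf.prob W U \<le> Ex q T (indicator U)"
  using Q_mono[of T] Q_0 Q_T by simp

end


lemma Win_up: "x \<in> Win T s k \<Longrightarrow> wle x y \<Longrightarrow> y \<in> Win T s k"
  unfolding Win_def using win_mono by (auto simp: wle_def)

lemma Win_empty: "T < s + k \<Longrightarrow> Win T s k = {}"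
  unfolding Win_def wins_def by auto

lemma final_exp:
  fixes e :: real
  assumes e: "0 < e" "e < 1" and K: "4 \<le> e ^ 3 * real k"
  shows "3 / 2 * (1 - e^3/4) ^ k \<le> exp (- (1/8) * (e ^ 3 * real k))"
proof -
  define a where "a = e ^ 3 * real k / 4"
  have a1: "1 \<le> a" using K by (simp add: a_def)
  have "e^3 \<le> 1" using e by (simp add: power_le_one)
  then have th0: "0 \<le> 1 - e^3/4" by simp
  have "1 - e^3/4 \<le> exp (- (e^3/4))" using exp_ge_add_one_self[of "- (e^3/4)"] by simp
  then have "(1 - e^3/4) ^ k \<le> exp (- (e^3/4)) ^ k" using th0 by (intro power_mono) auto
  also have "\<dots> = exp (- a)" unfolding a_def by (simp add: exp_of_nat_mult[symmetric] algebra_simps)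
  finally have p: "(1 - e^3/4) ^ k \<le> exp (- a)" .
  have "3 / 2 \<le> exp (1/2 :: real)" using exp_ge_add_one_self[of "1/2::real"] by simp
  also have "\<dots> \<le> exp (a / 2)" using a1 by simp
  finally have t: "3 / 2 \<le> exp (a / 2)" .
  have "3 / 2 * (1 - e^3/4) ^ k \<le> exp (a / 2) * exp (- a)"
    using p t th0 by (intro mult_mono) auto
  also have "\<dots> = exp (- (a / 2))" by (simp add: exp_add[symmetric])
  also have "- (a / 2) = - (1/8) * (e ^ 3 * real k)" by (simp add: a_def)
  finally show ?thesis .
qed

theorem theorem1:
  "\<exists>c::real. c > 0 \<and> (\<exists>C::real. C \<ge> 0 \<and> (\<exists>K::real.
     \<forall>(\<epsilon>::real) (s::nat) (k::nat) (T::nat) (W::bool list pmf).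
       0 < \<epsilon> \<and> \<epsilon> < 1 \<and> set_pmf W \<subseteq> {w. length w = T} \<and> martingale_cond \<epsilon> T W \<longrightarrow>
       settle_insec W T s k \<le> settle_insec (bern_list ((1 - \<epsilon>) / 2) T) T s k \<and>
       (K \<le> \<epsilon> ^ 3 * real k \<longrightarrow>
          settle_insec (bern_list ((1 - \<epsilon>) / 2) T) T s k
            \<le> exp (- c * (\<epsilon> ^ 3 * (1 - C * \<epsilon>) * real k)))))"
proof (rule exI[of _ "1/8"], rule conjI, simp, rule exI[of _ "0"], rule conjI, simp, rule exI[of _ "4"], intro allI impI conjI)
  fix e :: real and s k T :: nat and W :: "bool list pmf"
  assume H: "0 < e \<and> e < 1 \<and> set_pmf W \<subseteq> {w. length w = T} \<and> martingale_cond e T W"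
  then have e: "0 < e" "e < 1" and supp: "set_pmf W \<subseteq> {w. length w = T}" and mc: "martingale_cond e T W"
    by auto
  define q where "q = (1 - e) / 2"
  have q: "0 \<le> q" "q \<le> 1" using e by (auto simp: q_def)
  have iW: "settle_insec W T s k = measure_pmf.prob W (Win T s k)" by (rule insec_eq[OF supp])
  have iB: "settle_insec (bern_list q T) T s k = measure_pmf.prob (bern_list q T) (Win T s k)"
    by (rule insec_eq[OF set_bern[OF q]])
  have pB: "measure_pmf.prob (bern_list q T) (Win T s k) = Ex q T (indicator (Win T s k))"
    by (rule prob_bern_Ex[OF q])
  interpret dom W T q "Win T s k"
  proof
    show "set_pmf W \<subseteq> {w. length w = T}" by (rule supp)
    show "0 \<le> q" "q \<le> 1" by (rule q)+
    fix x :: "bool list" assume "length x < T"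
    then show "measure_pmf.prob W {w. take (length x) w = x \<and> w ! length x} \<le> q * measure_pmf.prob W {w. take (length x) w = x}"
      using mc by (simp add: martingale_cond_def q_def)
  next
    fix x y assume "x \<in> Win T s k" "wle x y"
    then show "y \<in> Win T s k" by (rule Win_up)
  qed
  show "settle_insec W T s k \<le> settle_insec (bern_list ((1 - e) / 2) T) T s k"
    using dominate iW iB pB by (simp add: q_def)
  assume K: "4 \<le> e ^ 3 * real k"
  show "settle_insec (bern_list ((1 - e) / 2) T) T s k \<le> exp (- (1/8) * (e ^ 3 * (1 - 0 * e) * real k))"
  proof (cases "T < s + k")
    case True
    then show ?thesis using iB by (simp add: Win_empty q_def)
  next
    case False
    then have T: "s + k \<le> T" by simp
    define r where "r = (1 - e) / (1 + e)"
    have r0: "0 \<le> r" using e by (simp add: r_def)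
    have "Ex q T (indicator (Win T s k)) \<le> Ex q T (\<lambda>w. r ^ go s k 0 0 0 w)"
    proof (rule Ex_mono[OF q])
      fix w :: "bool list" assume "length w = T"
      show "indicator (Win T s k) w \<le> r ^ go s k 0 0 0 w"
      proof (cases "w \<in> Win T s k")
        case True
        then obtain P where "valid_play w P" "wins s k w P" by (auto simp: Win_def)
        then have "go s k 0 0 0 w = 0" by (rule wins_go)
        then show ?thesis using True by simp
      next
        case False then show ?thesis using r0 by simp
      qed
    qed
    also have "\<dots> \<le> 3 / 2 * (1 - e^3/4) ^ k" using walk_bound[OF e T] by (simp add: q_def r_def)
    also have "\<dots> \<le> exp (- (1/8) * (e ^ 3 * real k))" by (rule final_exp[OF e K])
    finally show ?thesis using iB pB by (simp add: q_def)
  qed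
qed


end
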